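(* Let $(H,\partial)$ be a right Cartan–Eilenberg system, with right couple $(A'',E^1,\alpha,\beta,\gamma)$. Then there is a natural isomorphism $$W''\xrightarrow{\ \cong\ }\ker(\kappa)$$ of internal degree $-1$, where $W''=\operatorname{colim}_s\operatorname{Rlim}_r K_\infty\operatorname{im}^rA''_s$ is Boardman's whole-plane obstruction group of the right couple and $\kappa\colon \operatorname{colim}_j\lim_iH(i,j)\to\lim_i\operatorname{colim}_jH(i,j)$ is the interchange morphism of the underlying Cartan–Eilenberg system. (No convergence hypothesis is assumed.)
   Context: Let $R$ be a ring and $\mathcal{A}$ the abelian category of $\mathbb{Z}$-graded $R$-modules (grading = internal degree). For a linearly ordered set $\mathcal{I}$, an $\mathcal{I}$-system $(H,\partial)$ consists of objects $H(i,j)\in\mathcal{A}$ for $i\le j$ in $\mathcal{I}$, functorial morphisms $\eta\colon H(i,j)\to H(i',j')$ of internal degree $0$ for $i\le i'$, $j\le j'$, and natural morphisms $\partial\colon H(j,k)\to H(i,j)$ of internal degree $-1$ for $i\le j\le k$ (commuting with the $\eta$'s), such that $H(i,j)\xrightarrow{\eta}H(i,k)\xrightarrow{\eta}H(j,k)\xrightarrow{\partial}H(i,j)$ is exact at each vertex for all $i\le j\le k$. A Cartan–Eilenberg system is a $\mathbb{Z}$-system; a right Cartan–Eilenberg system is a $(\mathbb{Z}\cup\{+\infty\})$-system, $+\infty$ being the greatest element; its underlying Cartan–Eilenberg system is its restriction to $\mathbb{Z}$. The right couple of a right Cartan–Eilenberg system: $A''_s=H(s,\infty)$, $E^1_s=H(s-1,s)$,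 $\alpha_s=\eta\colon A''_{s-1}\to A''_s$, $\beta_s=\partial\colon H(s,\infty)\to H(s-1,s)$, $\gamma_s=\eta\colon H(s-1,s)\to H(s-1,\infty)$. For an exact couple (or any sequence) $\cdots\to A_{s-1}\xrightarrow{\alpha}A_s\to\cdots$: $A_\infty=\operatorname{colim}_sA_s$ with structure maps $\iota_s\colon A_s\to A_\infty$; $\operatorname{im}^rA_s=\operatorname{im}(\alpha^r\colon A_{s-r}\to A_s)$; $K_\infty\operatorname{im}^rA_s=\ker(\iota_s)\cap\operatorname{im}^rA_s$, a decreasing sequence in $r$; $W=\operatorname{colim}_s\operatorname{Rlim}_rK_\infty\operatorname{im}^rA_s$ (colimit along maps induced by $\alpha$), where $\operatorname{Rlim}=\lim^1$. Limits/derived limits over $i$ are along $\eta\colon H(i-1,j)\to H(i,j)$ as $i\to-\infty$, colimits over $j$ along $\eta\colon H(i,j)\to H(i,j+1)$. The interchange morphism $\kappa\colon\operatorname{colim}_j\lim_iH(i,j)\to\lim_i\operatorname{colim}_jH(i,j)$ is the canonical morphism whose restriction to $\lim_iH(i,j)$ followed by projection to $\operatorname{colim}_jH(i,j)$ is $\lim_iH(i,j)\to H(i,j)\to\operatorname{colim}_jH(i,j)$. *)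

theory Defs
  imports Main
begin

datatype zinf = Fin int | PInf

fun zle :: "zinf \<Rightarrow> zinf \<Rightarrow> bool" where
  "zle (Fin a) (Fin b) = (a \<le> b)"
| "zle _ PInf = True"
| "zle PInf (Fin _) = False"

section \<open>Left modules over a ring (carrier-based, so that constructions can be performed)\<close>

record ('r, 'a) rmod =
  carr  :: "'a set"
  madd  :: "'a \<Rightarrow> 'a \<Rightarrow> 'a"
  mzero :: "'a"
  mneg  :: "'a \<Rightarrow> 'a"
  msmul :: "'r \<Rightarrow> 'a \<Rightarrow> 'a"

definition is_rmod :: "('r::ring_1, 'a) rmod \<Rightarrow> bool" where
  "is_rmod M \<longleftrightarrow>
     mzero M \<in> carr M
   \<and> (\<forall>x\<in>carr M. \<forall>y\<in>carr M. madd M x y \<in> carr M)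
   \<and> (\<forall>x\<in>carr M. mneg M x \<in> carr M)
   \<and> (\<forall>r. \<forall>x\<in>carr M. msmul M r x \<in> carr M)
   \<and> (\<forall>x\<in>carr M. \<forall>y\<in>carr M. \<forall>z\<in>carr M. madd M (madd M x y) z = madd M x (madd M y z))
   \<and> (\<forall>x\<in>carr M. \<forall>y\<in>carr M. madd M x y = madd M y x)
   \<and> (\<forall>x\<in>carr M. madd M (mzero M) x = x)
   \<and> (\<forall>x\<in>carr M. madd M (mneg M x) x = mzero M)
   \<and> (\<forall>x\<in>carr M. msmul M 1 x = x)
   \<and> (\<forall>r s. \<forall>x\<in>carr M. msmul M (r * s) x = msmul M r (msmul M s x))
   \<and> (\<forall>r s. \<forall>x\<in>carr M. msmul M (r + s) x = madd M (msmul M r x) (msmul M s x))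
   \<and> (\<forall>r. \<forall>x\<in>carr M. \<forall>y\<in>carr M. msmul M r (madd M x y) = madd M (msmul M r x) (msmul M r y))"

definition is_hom :: "('r, 'a) rmod \<Rightarrow> ('r, 'b) rmod \<Rightarrow> ('a \<Rightarrow> 'b) \<Rightarrow> bool" where
  "is_hom M N f \<longleftrightarrow>
     (\<forall>x\<in>carr M. f x \<in> carr N)
   \<and> (\<forall>x\<in>carr M. \<forall>y\<in>carr M. f (madd M x y) = madd N (f x) (f y))
   \<and> (\<forall>r. \<forall>x\<in>carr M. f (msmul M r x) = msmul N r (f x))"

definition is_iso :: "('r, 'a) rmod \<Rightarrow> ('r, 'b) rmod \<Rightarrow> ('a \<Rightarrow> 'b) \<Rightarrow> bool" where
  "is_iso M N f \<longleftrightarrow> is_hom M N f \<and> bij_betw f (carr M) (carr N)"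

definition kerm :: "('r, 'a) rmod \<Rightarrow> ('r, 'b) rmod \<Rightarrow> ('a \<Rightarrow> 'b) \<Rightarrow> ('r, 'a) rmod" where
  "kerm M N f = M\<lparr>carr := {x \<in> carr M. f x = mzero N}\<rparr>"

definition rep :: "'b set \<Rightarrow> 'b" where
  "rep c = (SOME p. p \<in> c)"

section \<open>Sequential colimits (direct systems indexed by an up-set J of integers)\<close>

text \<open>Convention: t k : M (k-1) -> M k.  iter t j n : M j -> M (j+n).\<close>
fun iter :: "(int \<Rightarrow> 'a \<Rightarrow> 'a) \<Rightarrow> int \<Rightarrow> nat \<Rightarrow> 'a \<Rightarrow> 'a" where
  "iter t j 0 x = x"
| "iter t j (Suc n) x = t (j + int n + 1) (iter t j n x)"

definition colim_rel :: "(int \<Rightarrow> 'a \<Rightarrow> 'a) \<Rightarrow> int \<times> 'a \<Rightarrow> int \<times> 'a \<Rightarrow> bool" where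
  "colim_rel t p q \<longleftrightarrow> (\<exists>m. fst p \<le> m \<and> fst q \<le> m \<and>
      iter t (fst p) (nat (m - fst p)) (snd p) = iter t (fst q) (nat (m - fst q)) (snd q))"

definition colim_cls :: "(int \<Rightarrow> ('r, 'a) rmod) \<Rightarrow> (int \<Rightarrow> 'a \<Rightarrow> 'a) \<Rightarrow> int set \<Rightarrow> int \<times> 'a \<Rightarrow> (int \<times> 'a) set" where
  "colim_cls M t J p = {q. fst q \<in> J \<and> snd q \<in> carr (M (fst q)) \<and> colim_rel t p q}"

definition colim :: "(int \<Rightarrow> ('r, 'a) rmod) \<Rightarrow> (int \<Rightarrow> 'a \<Rightarrow> 'a) \<Rightarrow> int set \<Rightarrow> ('r, (int \<times> 'a) set) rmod" where
  "colim M t J =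
    \<lparr> carr = {colim_cls M t J (j, x) | j x. j \<in> J \<and> x \<in> carr (M j)},
      madd = (\<lambda>c d. let (j, x) = rep c; (k, y) = rep d; m = max j k in
                 colim_cls M t J (m, madd (M m) (iter t j (nat (m - j)) x) (iter t k (nat (m - k)) y))),
      mzero = (let j = (SOME j. j \<in> J) in colim_cls M t J (j, mzero (M j))),
      mneg = (\<lambda>c. let (j, x) = rep c in colim_cls M t J (j, mneg (M j) x)),
      msmul = (\<lambda>r c. let (j, x) = rep c in colim_cls M t J (j, msmul (M j) r x)) \<rparr>"

section \<open>Inverse limits over a down-set I of integers (limit as i -> -infinity)\<close>

text \<open>Convention: t i : M (i-1) -> M i.\<close>
definition ilim :: "(int \<Rightarrow> ('r, 'a) rmod) \<Rightarrow> (int \<Rightarrow> 'a \<Rightarrow> 'a) \<Rightarrow> int set \<Rightarrow> ('r, int \<Rightarrow> 'a) rmod" where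
  "ilim M t I =
    \<lparr> carr = {x. (\<forall>i\<in>I. x i \<in> carr (M i)) \<and> (\<forall>i. i \<in> I \<longrightarrow> i - 1 \<in> I \<longrightarrow> t i (x (i - 1)) = x i)
                 \<and> (\<forall>i. i \<notin> I \<longrightarrow> x i = undefined)},
      madd = (\<lambda>x y i. if i \<in> I then madd (M i) (x i) (y i) else undefined),
      mzero = (\<lambda>i. if i \<in> I then mzero (M i) else undefined),
      mneg = (\<lambda>x i. if i \<in> I then mneg (M i) (x i) else undefined),
      msmul = (\<lambda>r x i. if i \<in> I then msmul (M i) r (x i) else undefined) \<rparr>"

section \<open>The first derived limit Rlim = lim^1 of a tower  ... -> M (n+1) -> M n -> ... -> M 0\<close>

definition lim1_delta :: "(nat \<Rightarrow> ('r, 'a) rmod) \<Rightarrow> (nat \<Rightarrow> 'a \<Rightarrow> 'a) \<Rightarrow> (nat \<Rightarrow> 'a) \<Rightarrow> nat \<Rightarrow> 'a" where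
  "lim1_delta M t w n = madd (M n) (w n) (mneg (M n) (t n (w (Suc n))))"

definition lim1_cls :: "(nat \<Rightarrow> ('r, 'a) rmod) \<Rightarrow> (nat \<Rightarrow> 'a \<Rightarrow> 'a) \<Rightarrow> (nat \<Rightarrow> 'a) \<Rightarrow> (nat \<Rightarrow> 'a) set" where
  "lim1_cls M t y = {z. (\<forall>n. z n \<in> carr (M n)) \<and>
       (\<exists>w. (\<forall>n. w n \<in> carr (M n)) \<and> (\<forall>n. z n = madd (M n) (y n) (lim1_delta M t w n)))}"

definition lim1 :: "(nat \<Rightarrow> ('r, 'a) rmod) \<Rightarrow> (nat \<Rightarrow> 'a \<Rightarrow> 'a) \<Rightarrow> ('r, (nat \<Rightarrow> 'a) set) rmod" where
  "lim1 M t =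
    \<lparr> carr = {lim1_cls M t y | y. \<forall>n. y n \<in> carr (M n)},
      madd = (\<lambda>c d. lim1_cls M t (\<lambda>n. madd (M n) (rep c n) (rep d n))),
      mzero = lim1_cls M t (\<lambda>n. mzero (M n)),
      mneg = (\<lambda>c. lim1_cls M t (\<lambda>n. mneg (M n) (rep c n))),
      msmul = (\<lambda>r c. lim1_cls M t (\<lambda>n. msmul (M n) r (rep c n))) \<rparr>"

section \<open>Boardman's whole-plane obstruction group W of a sequence ... -> A (s-1) -> A s -> ...\<close>

text \<open>al s : A (s-1) -> A s.\<close>

definition iota :: "(int \<Rightarrow> ('r, 'a) rmod) \<Rightarrow> (int \<Rightarrow> 'a \<Rightarrow> 'a) \<Rightarrow> int \<Rightarrow> 'a \<Rightarrow> (int \<times> 'a) set" where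
  "iota A al s x = colim_cls A al UNIV (s, x)"

definition imr :: "(int \<Rightarrow> ('r, 'a) rmod) \<Rightarrow> (int \<Rightarrow> 'a \<Rightarrow> 'a) \<Rightarrow> nat \<Rightarrow> int \<Rightarrow> 'a set" where
  "imr A al r s = iter al (s - int r) r ` carr (A (s - int r))"

definition Kinf_imr :: "(int \<Rightarrow> ('r, 'a) rmod) \<Rightarrow> (int \<Rightarrow> 'a \<Rightarrow> 'a) \<Rightarrow> nat \<Rightarrow> int \<Rightarrow> 'a set" where
  "Kinf_imr A al r s = {x \<in> carr (A s). iota A al s x = mzero (colim A al UNIV)} \<inter> imr A al r s"

definition Ktower :: "(int \<Rightarrow> ('r, 'a) rmod) \<Rightarrow> (int \<Rightarrow> 'a \<Rightarrow> 'a) \<Rightarrow> int \<Rightarrow> nat \<Rightarrow> ('r, 'a) rmod" where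
  "Ktower A al s r = (A s)\<lparr>carr := Kinf_imr A al r s\<rparr>"

definition RlimK :: "(int \<Rightarrow> ('r, 'a) rmod) \<Rightarrow> (int \<Rightarrow> 'a \<Rightarrow> 'a) \<Rightarrow> int \<Rightarrow> ('r, (nat \<Rightarrow> 'a) set) rmod" where
  "RlimK A al s = lim1 (Ktower A al s) (\<lambda>r x. x)"

definition RlimK_tr :: "(int \<Rightarrow> ('r, 'a) rmod) \<Rightarrow> (int \<Rightarrow> 'a \<Rightarrow> 'a) \<Rightarrow> int \<Rightarrow> (nat \<Rightarrow> 'a) set \<Rightarrow> (nat \<Rightarrow> 'a) set" where
  "RlimK_tr A al s c = lim1_cls (Ktower A al s) (\<lambda>r x. x) (\<lambda>r. al s (rep c r))"

definition Wgrp :: "(int \<Rightarrow> ('r, 'a) rmod) \<Rightarrow> (int \<Rightarrow> 'a \<Rightarrow> 'a) \<Rightarrow> ('r, (int \<times> (nat \<Rightarrow> 'a) set) set) rmod" where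
  "Wgrp A al = colim (RlimK A al) (RlimK_tr A al) UNIV"

definition Wmap :: "(int \<Rightarrow> ('r, 'a) rmod) \<Rightarrow> (int \<Rightarrow> 'a \<Rightarrow> 'a) \<Rightarrow> (int \<Rightarrow> 'a \<Rightarrow> 'a)
    \<Rightarrow> (int \<times> (nat \<Rightarrow> 'a) set) set \<Rightarrow> (int \<times> (nat \<Rightarrow> 'a) set) set" where
  "Wmap A' al' g c = (case rep c of (s, d) \<Rightarrow>
      colim_cls (RlimK A' al') (RlimK_tr A' al') UNIV
        (s, lim1_cls (Ktower A' al' s) (\<lambda>r x. x) (\<lambda>r. g s (rep d r))))"

section \<open>(Right) Cartan-Eilenberg systems of graded modules, stored degreewise\<close>

text \<open>H i j n is the degree-n part of H(i,j);
  eta i j i' j' n : H(i,j)_n -> H(i',j')_n;  del i j k n : H(j,k)_n -> H(i,j)_(n-1).\<close>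

definition right_CE ::
  "(zinf \<Rightarrow> zinf \<Rightarrow> int \<Rightarrow> ('r::ring_1, 'a) rmod)
   \<Rightarrow> (zinf \<Rightarrow> zinf \<Rightarrow> zinf \<Rightarrow> zinf \<Rightarrow> int \<Rightarrow> 'a \<Rightarrow> 'a)
   \<Rightarrow> (zinf \<Rightarrow> zinf \<Rightarrow> zinf \<Rightarrow> int \<Rightarrow> 'a \<Rightarrow> 'a) \<Rightarrow> bool" where
  "right_CE H eta del \<longleftrightarrow>
     (\<forall>i j n. zle i j \<longrightarrow> is_rmod (H i j n))
   \<and> (\<forall>i j i' j' n. zle i j \<and> zle i' j' \<and> zle i i' \<and> zle j j' \<longrightarrow>
          is_hom (H i j n) (H i' j' n) (eta i j i' j' n))
   \<and> (\<forall>i j n. \<forall>x\<in>carr (H i j n). zle i j \<longrightarrow> eta i j i j n x = x)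
   \<and> (\<forall>i j i' j' i'' j'' n. \<forall>x\<in>carr (H i j n).
          zle i j \<and> zle i' j' \<and> zle i'' j'' \<and> zle i i' \<and> zle j j' \<and> zle i' i'' \<and> zle j' j'' \<longrightarrow>
          eta i' j' i'' j'' n (eta i j i' j' n x) = eta i j i'' j'' n x)
   \<and> (\<forall>i j k n. zle i j \<and> zle j k \<longrightarrow> is_hom (H j k n) (H i j (n - 1)) (del i j k n))
   \<and> (\<forall>i j k i' j' k' n. \<forall>x\<in>carr (H j k n).
          zle i j \<and> zle j k \<and> zle i' j' \<and> zle j' k' \<and> zle i i' \<and> zle j j' \<and> zle k k' \<longrightarrow>
          eta i j i' j' (n - 1) (del i j k n x) = del i' j' k' n (eta j k j' k' n x))
   \<and> (\<forall>i j k n. zle i j \<and> zle j k \<longrightarrow>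
          eta i j i k n ` carr (H i j n) = {y \<in> carr (H i k n). eta i k j k n y = mzero (H j k n)}
        \<and> eta i k j k n ` carr (H i k n) = {y \<in> carr (H j k n). del i j k n y = mzero (H i j (n - 1))}
        \<and> del i j k n ` carr (H j k n) = {y \<in> carr (H i j (n - 1)). eta i j i k (n - 1) y = mzero (H i k (n - 1))})"

definition right_CE_mor ::
  "(zinf \<Rightarrow> zinf \<Rightarrow> int \<Rightarrow> ('r::ring_1, 'a) rmod)
   \<Rightarrow> (zinf \<Rightarrow> zinf \<Rightarrow> zinf \<Rightarrow> zinf \<Rightarrow> int \<Rightarrow> 'a \<Rightarrow> 'a)
   \<Rightarrow> (zinf \<Rightarrow> zinf \<Rightarrow> zinf \<Rightarrow> int \<Rightarrow> 'a \<Rightarrow> 'a)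
   \<Rightarrow> (zinf \<Rightarrow> zinf \<Rightarrow> int \<Rightarrow> ('r, 'a) rmod)
   \<Rightarrow> (zinf \<Rightarrow> zinf \<Rightarrow> zinf \<Rightarrow> zinf \<Rightarrow> int \<Rightarrow> 'a \<Rightarrow> 'a)
   \<Rightarrow> (zinf \<Rightarrow> zinf \<Rightarrow> zinf \<Rightarrow> int \<Rightarrow> 'a \<Rightarrow> 'a)
   \<Rightarrow> (zinf \<Rightarrow> zinf \<Rightarrow> int \<Rightarrow> 'a \<Rightarrow> 'a) \<Rightarrow> bool" where
  "right_CE_mor H eta del H' eta' del' f \<longleftrightarrow>
     (\<forall>i j n. zle i j \<longrightarrow> is_hom (H i j n) (H' i j n) (f i j n))
   \<and> (\<forall>i j i' j' n. \<forall>x\<in>carr (H i j n). zle i j \<and> zle i' j' \<and> zle i i' \<and> zle j j' \<longrightarrow>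
          f i' j' n (eta i j i' j' n x) = eta' i j i' j' n (f i j n x))
   \<and> (\<forall>i j k n. \<forall>x\<in>carr (H j k n). zle i j \<and> zle j k \<longrightarrow>
          f i j (n - 1) (del i j k n x) = del' i j k n (f j k n x))"

definition Acpl :: "(zinf \<Rightarrow> zinf \<Rightarrow> int \<Rightarrow> ('r, 'a) rmod) \<Rightarrow> int \<Rightarrow> int \<Rightarrow> ('r, 'a) rmod" where
  "Acpl H n s = H (Fin s) PInf n"

definition alcpl :: "(zinf \<Rightarrow> zinf \<Rightarrow> zinf \<Rightarrow> zinf \<Rightarrow> int \<Rightarrow> 'a \<Rightarrow> 'a) \<Rightarrow> int \<Rightarrow> int \<Rightarrow> 'a \<Rightarrow> 'a" where
  "alcpl eta n s = eta (Fin (s - 1)) PInf (Fin s) PInf n"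

definition Wpp :: "(zinf \<Rightarrow> zinf \<Rightarrow> int \<Rightarrow> ('r, 'a) rmod) \<Rightarrow> (zinf \<Rightarrow> zinf \<Rightarrow> zinf \<Rightarrow> zinf \<Rightarrow> int \<Rightarrow> 'a \<Rightarrow> 'a)
   \<Rightarrow> int \<Rightarrow> ('r, (int \<times> (nat \<Rightarrow> 'a) set) set) rmod" where
  "Wpp H eta n = Wgrp (Acpl H n) (alcpl eta n)"

definition LimH :: "(zinf \<Rightarrow> zinf \<Rightarrow> int \<Rightarrow> ('r, 'a) rmod) \<Rightarrow> (zinf \<Rightarrow> zinf \<Rightarrow> zinf \<Rightarrow> zinf \<Rightarrow> int \<Rightarrow> 'a \<Rightarrow> 'a)
   \<Rightarrow> int \<Rightarrow> int \<Rightarrow> ('r, int \<Rightarrow> 'a) rmod" where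
  "LimH H eta m j = ilim (\<lambda>i. H (Fin i) (Fin j) m) (\<lambda>i. eta (Fin (i - 1)) (Fin j) (Fin i) (Fin j) m) {..j}"

definition LimH_tr :: "(zinf \<Rightarrow> zinf \<Rightarrow> zinf \<Rightarrow> zinf \<Rightarrow> int \<Rightarrow> 'a \<Rightarrow> 'a) \<Rightarrow> int \<Rightarrow> int \<Rightarrow> (int \<Rightarrow> 'a) \<Rightarrow> int \<Rightarrow> 'a" where
  "LimH_tr eta m j x = (\<lambda>i. if i \<le> j then eta (Fin (min i (j - 1))) (Fin (j - 1)) (Fin i) (Fin j) m (x (min i (j - 1)))
                           else undefined)"

definition ColimLim :: "(zinf \<Rightarrow> zinf \<Rightarrow> int \<Rightarrow> ('r, 'a) rmod) \<Rightarrow> (zinf \<Rightarrow> zinf \<Rightarrow> zinf \<Rightarrow> zinf \<Rightarrow> int \<Rightarrow> 'a \<Rightarrow> 'a)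
   \<Rightarrow> int \<Rightarrow> ('r, (int \<times> (int \<Rightarrow> 'a)) set) rmod" where
  "ColimLim H eta m = colim (LimH H eta m) (LimH_tr eta m) UNIV"

definition ColimH :: "(zinf \<Rightarrow> zinf \<Rightarrow> int \<Rightarrow> ('r, 'a) rmod) \<Rightarrow> (zinf \<Rightarrow> zinf \<Rightarrow> zinf \<Rightarrow> zinf \<Rightarrow> int \<Rightarrow> 'a \<Rightarrow> 'a)
   \<Rightarrow> int \<Rightarrow> int \<Rightarrow> ('r, (int \<times> 'a) set) rmod" where
  "ColimH H eta m i = colim (\<lambda>j. H (Fin i) (Fin j) m) (\<lambda>j. eta (Fin i) (Fin (j - 1)) (Fin i) (Fin j) m) {i..}"

definition ColimH_cls :: "(zinf \<Rightarrow> zinf \<Rightarrow> int \<Rightarrow> ('r, 'a) rmod) \<Rightarrow> (zinf \<Rightarrow> zinf \<Rightarrow> zinf \<Rightarrow> zinf \<Rightarrow> int \<Rightarrow> 'a \<Rightarrow> 'a)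
   \<Rightarrow> int \<Rightarrow> int \<Rightarrow> int \<times> 'a \<Rightarrow> (int \<times> 'a) set" where
  "ColimH_cls H eta m i p = colim_cls (\<lambda>j. H (Fin i) (Fin j) m) (\<lambda>j. eta (Fin i) (Fin (j - 1)) (Fin i) (Fin j) m) {i..} p"

definition ColimH_tr :: "(zinf \<Rightarrow> zinf \<Rightarrow> int \<Rightarrow> ('r, 'a) rmod) \<Rightarrow> (zinf \<Rightarrow> zinf \<Rightarrow> zinf \<Rightarrow> zinf \<Rightarrow> int \<Rightarrow> 'a \<Rightarrow> 'a)
   \<Rightarrow> int \<Rightarrow> int \<Rightarrow> (int \<times> 'a) set \<Rightarrow> (int \<times> 'a) set" where
  "ColimH_tr H eta m i c = (case rep c of (j, x) \<Rightarrow>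
      ColimH_cls H eta m i (max i j, eta (Fin (i - 1)) (Fin j) (Fin i) (Fin (max i j)) m x))"

definition LimColim :: "(zinf \<Rightarrow> zinf \<Rightarrow> int \<Rightarrow> ('r, 'a) rmod) \<Rightarrow> (zinf \<Rightarrow> zinf \<Rightarrow> zinf \<Rightarrow> zinf \<Rightarrow> int \<Rightarrow> 'a \<Rightarrow> 'a)
   \<Rightarrow> int \<Rightarrow> ('r, int \<Rightarrow> (int \<times> 'a) set) rmod" where
  "LimColim H eta m = ilim (ColimH H eta m) (ColimH_tr H eta m) UNIV"

text \<open>kappa: its component at i <= j on lim_i H(i,j) is  lim_i H(i,j) -> H(i,j) -> colim_j H(i,j);
  the components at i > j are forced by compatibility.\<close>
definition kappa :: "(zinf \<Rightarrow> zinf \<Rightarrow> int \<Rightarrow> ('r, 'a) rmod) \<Rightarrow> (zinf \<Rightarrow> zinf \<Rightarrow> zinf \<Rightarrow> zinf \<Rightarrow> int \<Rightarrow> 'a \<Rightarrow> 'a)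
   \<Rightarrow> int \<Rightarrow> (int \<times> (int \<Rightarrow> 'a)) set \<Rightarrow> int \<Rightarrow> (int \<times> 'a) set" where
  "kappa H eta m c = (case rep c of (j, x) \<Rightarrow>
      (\<lambda>i. ColimH_cls H eta m i (max i j, eta (Fin (min i j)) (Fin j) (Fin i) (Fin (max i j)) m (x (min i j)))))"

definition ker_kappa :: "(zinf \<Rightarrow> zinf \<Rightarrow> int \<Rightarrow> ('r, 'a) rmod) \<Rightarrow> (zinf \<Rightarrow> zinf \<Rightarrow> zinf \<Rightarrow> zinf \<Rightarrow> int \<Rightarrow> 'a \<Rightarrow> 'a)
   \<Rightarrow> int \<Rightarrow> ('r, (int \<times> (int \<Rightarrow> 'a)) set) rmod" where
  "ker_kappa H eta m = kerm (ColimLim H eta m) (LimColim H eta m) (kappa H eta m)"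

definition ker_kappa_map :: "(zinf \<Rightarrow> zinf \<Rightarrow> int \<Rightarrow> ('r, 'a) rmod) \<Rightarrow> (zinf \<Rightarrow> zinf \<Rightarrow> zinf \<Rightarrow> zinf \<Rightarrow> int \<Rightarrow> 'a \<Rightarrow> 'a)
   \<Rightarrow> (zinf \<Rightarrow> zinf \<Rightarrow> int \<Rightarrow> 'a \<Rightarrow> 'a) \<Rightarrow> int
   \<Rightarrow> (int \<times> (int \<Rightarrow> 'a)) set \<Rightarrow> (int \<times> (int \<Rightarrow> 'a)) set" where
  "ker_kappa_map H' eta' f m c = (case rep c of (j, x) \<Rightarrow>
      colim_cls (LimH H' eta' m) (LimH_tr eta' m) UNIV
        (j, \<lambda>i. if i \<le> j then f (Fin i) (Fin j) m (x i) else undefined))"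

definition Wpp_map :: "(zinf \<Rightarrow> zinf \<Rightarrow> int \<Rightarrow> ('r, 'a) rmod) \<Rightarrow> (zinf \<Rightarrow> zinf \<Rightarrow> zinf \<Rightarrow> zinf \<Rightarrow> int \<Rightarrow> 'a \<Rightarrow> 'a)
   \<Rightarrow> (zinf \<Rightarrow> zinf \<Rightarrow> int \<Rightarrow> 'a \<Rightarrow> 'a) \<Rightarrow> int
   \<Rightarrow> (int \<times> (nat \<Rightarrow> 'a) set) set \<Rightarrow> (int \<times> (nat \<Rightarrow> 'a) set) set" where
  "Wpp_map H' eta' f n = Wmap (Acpl H' n) (alcpl eta' n) (\<lambda>s. f (Fin s) PInf n)"

end

theory Submission
  imports Defs
begin

context fixes M :: "('r::ring_1, 'a) rmod" assumes M: "is_rmod M"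
begin
lemma m_zero: "mzero M \<in> carr M" using M unfolding is_rmod_def by metis
lemma m_add: "x \<in> carr M \<Longrightarrow> y \<in> carr M \<Longrightarrow> madd M x y \<in> carr M" using M unfolding is_rmod_def by metis
lemma m_neg: "x \<in> carr M \<Longrightarrow> mneg M x \<in> carr M" using M unfolding is_rmod_def by metis
lemma m_smul: "x \<in> carr M \<Longrightarrow> msmul M r x \<in> carr M" using M unfolding is_rmod_def by metis
lemma m_assoc: "x \<in> carr M \<Longrightarrow> y \<in> carr M \<Longrightarrow> z \<in> carr M \<Longrightarrow> madd M (madd M x y) z = madd M x (madd M y z)"
  using M unfolding is_rmod_def by metis
lemma m_comm: "x \<in> carr M \<Longrightarrow> y \<in> carr M \<Longrightarrow> madd M x y = madd M y x" using M unfolding is_rmod_def by metis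
lemma m_lzero: "x \<in> carr M \<Longrightarrow> madd M (mzero M) x = x" using M unfolding is_rmod_def by metis
lemma m_rzero: "x \<in> carr M \<Longrightarrow> madd M x (mzero M) = x" using m_lzero m_comm m_zero by metis
lemma m_lneg: "x \<in> carr M \<Longrightarrow> madd M (mneg M x) x = mzero M" using M unfolding is_rmod_def by metis
lemma m_rneg: "x \<in> carr M \<Longrightarrow> madd M x (mneg M x) = mzero M" using m_lneg m_comm m_neg by metis
lemma m_smul_add: "x \<in> carr M \<Longrightarrow> y \<in> carr M \<Longrightarrow> msmul M r (madd M x y) = madd M (msmul M r x) (msmul M r y)"
  using M unfolding is_rmod_def by metis
lemma m_cancel: assumes "x \<in> carr M" "y \<in> carr M" "z \<in> carr M" "madd M x y = madd M x z" shows "y = z"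
proof -
  have "madd M (mneg M x) (madd M x y) = madd M (mneg M x) (madd M x z)" using assms by simp
  then have "madd M (madd M (mneg M x) x) y = madd M (madd M (mneg M x) x) z"
    using assms by (simp add: m_assoc m_neg)
  then show ?thesis using assms by (simp add: m_lneg m_lzero)
qed
lemma m_neg_unique: "x \<in> carr M \<Longrightarrow> y \<in> carr M \<Longrightarrow> madd M x y = mzero M \<Longrightarrow> y = mneg M x"
  by (metis m_cancel m_neg m_rneg)
lemma m_eq_zero_diff: "x \<in> carr M \<Longrightarrow> y \<in> carr M \<Longrightarrow> madd M x (mneg M y) = mzero M \<Longrightarrow> x = y"
  by (metis m_neg m_neg_unique m_comm m_lneg m_cancel)
lemma m_neg_neg: "x \<in> carr M \<Longrightarrow> mneg M (mneg M x) = x"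
  by (metis m_neg m_neg_unique m_lneg)
lemma m_neg_zero: "mneg M (mzero M) = mzero M"
  by (metis m_zero m_neg_unique m_rzero)
lemma m_add_ac: "a \<in> carr M \<Longrightarrow> b \<in> carr M \<Longrightarrow> c \<in> carr M \<Longrightarrow> d \<in> carr M \<Longrightarrow>
   madd M (madd M a b) (madd M c d) = madd M (madd M a c) (madd M b d)"
  by (metis m_add m_assoc m_comm)
lemma m_neg_add: "x \<in> carr M \<Longrightarrow> y \<in> carr M \<Longrightarrow> mneg M (madd M x y) = madd M (mneg M x) (mneg M y)"
proof -
  assume a: "x \<in> carr M" "y \<in> carr M"
  have "madd M (madd M x y) (madd M (mneg M x) (mneg M y)) = madd M (madd M x (mneg M x)) (madd M y (mneg M y))"
    using a by (simp add: m_add_ac m_neg)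
  also have "\<dots> = mzero M" using a by (simp add: m_rneg m_lzero m_zero)
  finally show ?thesis using a by (metis m_neg_unique m_add m_neg)
qed
lemma m_smul_zero: "msmul M r (mzero M) = mzero M"
proof -
  have "madd M (msmul M r (mzero M)) (msmul M r (mzero M)) = madd M (msmul M r (mzero M)) (mzero M)"
    by (metis m_smul_add m_zero m_lzero m_rzero m_smul)
  then show ?thesis by (metis m_cancel m_smul m_zero)
qed
lemma m_smul_neg: "x \<in> carr M \<Longrightarrow> msmul M r (mneg M x) = mneg M (msmul M r x)"
  by (metis m_neg m_neg_unique m_rneg m_smul m_smul_add m_smul_zero)
end

lemma hom_carr: "is_hom M N f \<Longrightarrow> x \<in> carr M \<Longrightarrow> f x \<in> carr N" by (simp add: is_hom_def)
lemma hom_add: "is_hom M N f \<Longrightarrow> x \<in> carr M \<Longrightarrow> y \<in> carr M \<Longrightarrow> f (madd M x y) = madd N (f x) (f y)"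
  by (simp add: is_hom_def)
lemma hom_smul: "is_hom M N f \<Longrightarrow> x \<in> carr M \<Longrightarrow> f (msmul M r x) = msmul N r (f x)"
  by (simp add: is_hom_def)
lemma hom_zero: assumes "is_rmod M" "is_rmod N" "is_hom M N f" shows "f (mzero M) = mzero N"
proof -
  have z: "mzero M \<in> carr M" using assms(1) by (rule m_zero)
  have fz: "f (mzero M) \<in> carr N" using hom_carr[OF assms(3) z] .
  have "madd N (f (mzero M)) (f (mzero M)) = f (madd M (mzero M) (mzero M))"
    using hom_add[OF assms(3) z z] by simp
  also have "\<dots> = f (mzero M)" using m_lzero[OF assms(1) z] by simp
  also have "\<dots> = madd N (f (mzero M)) (mzero N)" using m_rzero[OF assms(2) fz] by simp
  finally show ?thesis using m_cancel[OF assms(2) fz fz m_zero[OF assms(2)]] by simp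
qed
lemma hom_neg: assumes "is_rmod M" "is_rmod N" "is_hom M N f" "x \<in> carr M" shows "f (mneg M x) = mneg N (f x)"
proof -
  have "madd N (f x) (f (mneg M x)) = mzero N"
    using assms hom_add[OF assms(3) assms(4) m_neg[OF assms(1) assms(4)]] m_rneg[OF assms(1) assms(4)] hom_zero[OF assms(1-3)] by simp
  then show ?thesis using m_neg_unique[OF assms(2)] hom_carr[OF assms(3)] assms(4) m_neg[OF assms(1)] by metis
qed

lemma submod: assumes "is_rmod M" "S \<subseteq> carr M" "mzero M \<in> S" "\<And>x y. x \<in> S \<Longrightarrow> y \<in> S \<Longrightarrow> madd M x y \<in> S"
  "\<And>x. x \<in> S \<Longrightarrow> mneg M x \<in> S" "\<And>r x. x \<in> S \<Longrightarrow> msmul M r x \<in> S"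
  shows "is_rmod (M\<lparr>carr := S\<rparr>)"
  using assms(1) unfolding is_rmod_def rmod.simps
  apply (elim conjE) apply (intro conjI)
  using assms(2-) by (simp_all add: subset_iff)

definition push :: "(int \<Rightarrow> 'a \<Rightarrow> 'a) \<Rightarrow> int \<Rightarrow> int \<Rightarrow> 'a \<Rightarrow> 'a" where
  "push t j u x = iter t j (nat (u - j)) x"

lemma iter_add: "iter t j (a + b) x = iter t (j + int a) b (iter t j a x)"
  by (induction b) (simp_all add: algebra_simps)

lemma push_push: assumes "j \<le> m" "m \<le> u" shows "push t m u (push t j m x) = push t j u x"
proof -
  have "nat (u - j) = nat (m - j) + nat (u - m)" using assms by simp
  then show ?thesis unfolding push_def using assms by (simp add: iter_add)
qed

lemma push_self[simp]: "push t j j x = x" by (simp add: push_def)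

lemma push_step: assumes "j \<le> u" shows "push t j (u + 1) x = t (u + 1) (push t j u x)"
proof -
  have "nat (u + 1 - j) = Suc (nat (u - j))" using assms by simp
  then show ?thesis using assms by (simp add: push_def)
qed

lemma push_induct[consumes 1, case_names base step]:
  assumes "(j::int) \<le> u" "P j" "\<And>v. j \<le> v \<Longrightarrow> P v \<Longrightarrow> P (v + 1)" shows "P u"
proof -
  have "\<And>k. P (j + int k)"
  proof -
    fix k show "P (j + int k)"
    proof (induction k)
      case (Suc k)
      have "P (j + int k + 1)" using assms(3)[OF _ Suc] by simp
      then show ?case by (simp add: algebra_simps)
    qed (use assms in simp)
  qed
  from this[of "nat (u - j)"] assms(1) show ?thesis by simp
qed

lemma colim_rel_iff: "colim_rel t (j, x) (k, y) \<longleftrightarrow> (\<exists>m. j \<le> m \<and> k \<le> m \<and> push t j m x = push t k m y)"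
  by (simp add: colim_rel_def push_def)

lemma rel_mono: "push t j m x = push t k m y \<Longrightarrow> j \<le> m \<Longrightarrow> k \<le> m \<Longrightarrow> m \<le> u \<Longrightarrow> push t j u x = push t k u y"
  by (metis push_push)

lemma rel_trans: "colim_rel t p q \<Longrightarrow> colim_rel t q r \<Longrightarrow> colim_rel t p r"
proof -
  assume a: "colim_rel t p q" "colim_rel t q r"
  obtain j x k y l z where e: "p = (j, x)" "q = (k, y)" "r = (l, z)" by (metis prod.exhaust)
  from a e obtain m1 m2 where m: "j \<le> m1" "k \<le> m1" "push t j m1 x = push t k m1 y"
    "k \<le> m2" "l \<le> m2" "push t k m2 y = push t l m2 z" by (auto simp: colim_rel_iff)
  let ?m = "max m1 m2"
  have "push t j ?m x = push t k ?m y" using rel_mono[OF m(3)] m by simp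
  also have "\<dots> = push t l ?m z" using rel_mono[OF m(6)] m by simp
  finally show ?thesis using e m by (auto simp: colim_rel_iff intro!: exI[of _ ?m])
qed

lemma rel_sym: "colim_rel t p q \<Longrightarrow> colim_rel t q p"
  by (auto simp: colim_rel_def)

lemma rel_refl: "colim_rel t p p"
  by (auto simp: colim_rel_def)

section \<open>Direct systems\<close>

locale dsys =
  fixes M :: "int \<Rightarrow> ('r::ring_1, 'a) rmod" and t :: "int \<Rightarrow> 'a \<Rightarrow> 'a" and J :: "int set"
  assumes upc: "j \<in> J \<Longrightarrow> j \<le> k \<Longrightarrow> k \<in> J"
    and tc: "k - 1 \<in> J \<Longrightarrow> x \<in> carr (M (k - 1)) \<Longrightarrow> t k x \<in> carr (M k)"
begin

abbreviation "cls \<equiv> colim_cls M t J"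

lemma push_carr: assumes "j \<in> J" "x \<in> carr (M j)" "j \<le> u" shows "push t j u x \<in> carr (M u)" "u \<in> J"
proof -
  show "push t j u x \<in> carr (M u)" using assms(3)
  proof (induction rule: push_induct)
    case base then show ?case using assms by simp
  next
    case (step v) then show ?case using assms tc[of "v+1"] upc by (simp add: push_step)
  qed
  show "u \<in> J" using assms upc by blast
qed

lemma cls_eq: assumes "j \<in> J" "k \<in> J" "x \<in> carr (M j)" "y \<in> carr (M k)"
  shows "cls (j, x) = cls (k, y) \<longleftrightarrow> (\<exists>m. j \<le> m \<and> k \<le> m \<and> push t j m x = push t k m y)"
proof
  assume "cls (j, x) = cls (k, y)"
  moreover have "(k, y) \<in> cls (k, y)" using assms by (simp add: colim_cls_def rel_refl)
  ultimately have "(k, y) \<in> cls (j, x)" by simp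
  then have "colim_rel t (j, x) (k, y)" by (simp add: colim_cls_def)
  then show "\<exists>m. j \<le> m \<and> k \<le> m \<and> push t j m x = push t k m y" by (simp add: colim_rel_iff)
next
  assume "\<exists>m. j \<le> m \<and> k \<le> m \<and> push t j m x = push t k m y"
  then have r: "colim_rel t (j, x) (k, y)" by (simp add: colim_rel_iff)
  show "cls (j, x) = cls (k, y)" unfolding colim_cls_def
    using rel_trans[OF r] rel_trans[OF rel_sym[OF r]] by auto
qed

lemma cls_push: assumes "j \<in> J" "x \<in> carr (M j)" "j \<le> u" shows "cls (u, push t j u x) = cls (j, x)"
  using assms push_carr[OF assms] by (subst cls_eq) (auto intro!: exI[of _ u])

lemma carr_colim: "c \<in> carr (colim M t J) \<longleftrightarrow> (\<exists>j x. j \<in> J \<and> x \<in> carr (M j) \<and> c = cls (j, x))"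
  by (auto simp: colim_def)

lemma rep_cls: assumes "j \<in> J" "x \<in> carr (M j)" "rep (cls (j, x)) = (j', x')"
  shows "j' \<in> J" "x' \<in> carr (M j')" "cls (j', x') = cls (j, x)"
proof -
  have "(j, x) \<in> cls (j, x)" using assms by (simp add: colim_cls_def rel_refl)
  then have "rep (cls (j, x)) \<in> cls (j, x)" unfolding rep_def by (rule someI)
  then have m: "(j', x') \<in> cls (j, x)" using assms by simp
  then show j: "j' \<in> J" and x: "x' \<in> carr (M j')" by (auto simp: colim_cls_def)
  from m have "colim_rel t (j, x) (j', x')" by (simp add: colim_cls_def)
  then show "cls (j', x') = cls (j, x)" using cls_eq[OF j assms(1) x assms(2)]
    by (metis colim_rel_iff)
qed

lemma cls_in: "j \<in> J \<Longrightarrow> x \<in> carr (M j) \<Longrightarrow> cls (j, x) \<in> carr (colim M t J)"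
  by (auto simp: carr_colim)

lemma cls_add:
  assumes tadd: "\<And>k x y. k - 1 \<in> J \<Longrightarrow> x \<in> carr (M (k - 1)) \<Longrightarrow> y \<in> carr (M (k - 1)) \<Longrightarrow>
            t k (madd (M (k - 1)) x y) = madd (M k) (t k x) (t k y)"
    and addc: "\<And>j x y. j \<in> J \<Longrightarrow> x \<in> carr (M j) \<Longrightarrow> y \<in> carr (M j) \<Longrightarrow> madd (M j) x y \<in> carr (M j)"
    and a: "j \<in> J" "k \<in> J" "x \<in> carr (M j)" "y \<in> carr (M k)" "j \<le> m" "k \<le> m"
  shows "madd (colim M t J) (cls (j, x)) (cls (k, y)) = cls (m, madd (M m) (push t j m x) (push t k m y))"
proof -
  have padd: "push t l u (madd (M l) x y) = madd (M u) (push t l u x) (push t l u y)"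
    if "l \<in> J" "x \<in> carr (M l)" "y \<in> carr (M l)" "l \<le> u" for l u x y
    using that(4)
  proof (induction rule: push_induct)
    case base then show ?case by simp
  next
    case (step v)
    then show ?case using that push_carr[of l _ v] tadd[of "v+1"] upc by (simp add: push_step)
  qed
  obtain j1 x1 where r1: "rep (cls (j, x)) = (j1, x1)" by (metis prod.exhaust)
  obtain k1 y1 where r2: "rep (cls (k, y)) = (k1, y1)" by (metis prod.exhaust)
  note R1 = rep_cls[OF a(1) a(3) r1] and R2 = rep_cls[OF a(2) a(4) r2]
  let ?p = "max j1 k1"
  have lhs: "madd (colim M t J) (cls (j, x)) (cls (k, y)) = cls (?p, madd (M ?p) (push t j1 ?p x1) (push t k1 ?p y1))"
    by (simp add: colim_def r1 r2 push_def Let_def)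
  obtain u1 where u1: "j1 \<le> u1" "j \<le> u1" "push t j1 u1 x1 = push t j u1 x"
    using R1 cls_eq[of j1 j x1 x] a by auto
  obtain u2 where u2: "k1 \<le> u2" "k \<le> u2" "push t k1 u2 y1 = push t k u2 y"
    using R2 cls_eq[of k1 k y1 y] a by auto
  define u where "u = max (max u1 u2) (max ?p m)"
  have pc: "push t j1 ?p x1 \<in> carr (M ?p)" "push t k1 ?p y1 \<in> carr (M ?p)" "?p \<in> J"
    using push_carr R1 R2 by auto
  have pc2: "push t j m x \<in> carr (M m)" "push t k m y \<in> carr (M m)" "m \<in> J"
    using push_carr a by auto
  have pu: "?p \<le> u" "m \<le> u" by (auto simp: u_def)
  have e1: "push t ?p u (push t j1 ?p x1) = push t j1 u x1" by (rule push_push) (auto simp: u_def)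
  have e2: "push t ?p u (push t k1 ?p y1) = push t k1 u y1" by (rule push_push) (auto simp: u_def)
  have e3: "push t m u (push t j m x) = push t j u x" by (rule push_push) (use a in \<open>auto simp: u_def\<close>)
  have e4: "push t m u (push t k m y) = push t k u y" by (rule push_push) (use a in \<open>auto simp: u_def\<close>)
  have "push t ?p u (madd (M ?p) (push t j1 ?p x1) (push t k1 ?p y1)) = madd (M u) (push t j1 u x1) (push t k1 u y1)"
    using padd[OF pc(3) pc(1) pc(2) pu(1)] u_def e1 e2 by simp
  also have "\<dots> = madd (M u) (push t j u x) (push t k u y)"
    using rel_mono[OF u1(3), of u] rel_mono[OF u2(3), of u] u1 u2 u_def by simp
  also have "\<dots> = push t m u (madd (M m) (push t j m x) (push t k m y))"
    using padd[OF pc2(3) pc2(1) pc2(2) pu(2)] u_def a e3 e4 by simp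
  finally have "cls (?p, madd (M ?p) (push t j1 ?p x1) (push t k1 ?p y1)) = cls (m, madd (M m) (push t j m x) (push t k m y))"
    using cls_eq[OF pc(3) pc2(3) addc[OF pc(3) pc(1) pc(2)] addc[OF pc2(3) pc2(1) pc2(2)]] u_def
    by (metis max.cobounded2 max.coboundedI2 max.cobounded1 max.coboundedI1)
  then show ?thesis using lhs by simp
qed

lemma cls_smul:
  assumes tsm: "\<And>k x. k - 1 \<in> J \<Longrightarrow> x \<in> carr (M (k - 1)) \<Longrightarrow>
            t k (msmul (M (k - 1)) r x) = msmul (M k) r (t k x)"
    and smc: "\<And>j x. j \<in> J \<Longrightarrow> x \<in> carr (M j) \<Longrightarrow> msmul (M j) r x \<in> carr (M j)"
    and a: "j \<in> J" "x \<in> carr (M j)"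
  shows "msmul (colim M t J) r (cls (j, x)) = cls (j, msmul (M j) r x)"
proof -
  have psm: "push t l u (msmul (M l) r x) = msmul (M u) r (push t l u x)"
    if "l \<in> J" "x \<in> carr (M l)" "l \<le> u" for l u x
    using that(3)
  proof (induction rule: push_induct)
    case base then show ?case by simp
  next
    case (step v)
    then show ?case using that push_carr[of l _ v] tsm[of "v+1"] upc by (simp add: push_step)
  qed
  obtain j1 x1 where r1: "rep (cls (j, x)) = (j1, x1)" by (metis prod.exhaust)
  note R1 = rep_cls[OF a(1) a(2) r1]
  have lhs: "msmul (colim M t J) r (cls (j, x)) = cls (j1, msmul (M j1) r x1)"
    by (simp add: colim_def r1)
  obtain u1 where u1: "j1 \<le> u1" "j \<le> u1" "push t j1 u1 x1 = push t j u1 x"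
    using R1 cls_eq[of j1 j x1 x] a by auto
  have "push t j1 u1 (msmul (M j1) r x1) = push t j u1 (msmul (M j) r x)"
    using psm[of j1 x1 u1] psm[of j x u1] R1 a u1 by simp
  then show ?thesis using lhs cls_eq[of j1 j "msmul (M j1) r x1" "msmul (M j) r x"] R1 a smc u1 by auto
qed

lemma cls_zero:
  assumes tz: "\<And>k. k - 1 \<in> J \<Longrightarrow> t k (mzero (M (k - 1))) = mzero (M k)"
    and zc: "\<And>j. j \<in> J \<Longrightarrow> mzero (M j) \<in> carr (M j)"
    and a: "j \<in> J" "x \<in> carr (M j)"
  shows "cls (j, x) = mzero (colim M t J) \<longleftrightarrow> (\<exists>u. j \<le> u \<and> push t j u x = mzero (M u))"
proof -
  have pz: "push t l u (mzero (M l)) = mzero (M u)" if "l \<in> J" "l \<le> u" for l u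
    using that(2)
  proof (induction rule: push_induct)
    case base then show ?case by simp
  next
    case (step v) then show ?case using that tz[of "v+1"] upc by (simp add: push_step)
  qed
  define j0 where "j0 = (SOME j. j \<in> J)"
  have j0: "j0 \<in> J" using a j0_def by (metis someI)
  have z: "mzero (colim M t J) = cls (j0, mzero (M j0))" by (simp add: colim_def j0_def Let_def)
  show ?thesis
  proof
    assume "cls (j, x) = mzero (colim M t J)"
    then obtain m where "j \<le> m" "j0 \<le> m" "push t j m x = push t j0 m (mzero (M j0))"
      using z cls_eq[OF a(1) j0 a(2) zc[OF j0]] by auto
    then show "\<exists>u. j \<le> u \<and> push t j u x = mzero (M u)" using pz[OF j0] by auto
  next
    assume "\<exists>u. j \<le> u \<and> push t j u x = mzero (M u)"
    then obtain u where u: "j \<le> u" "push t j u x = mzero (M u)" by auto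
    let ?m = "max u j0"
    have "push t j ?m x = push t u ?m (push t j u x)" by (rule push_push[symmetric]) (use u in auto)
    also have "\<dots> = mzero (M ?m)" using u pz[of u ?m] push_carr[OF a u(1)] by simp
    also have "\<dots> = push t j0 ?m (mzero (M j0))" using pz[OF j0, of ?m] by simp
    finally show "cls (j, x) = mzero (colim M t J)" using z cls_eq[OF a(1) j0 a(2) zc[OF j0]] u
      by (metis max.coboundedI1 max.cobounded2)
  qed
qed

end

section \<open>lim^1 of towers\<close>

locale tower =
  fixes M :: "nat \<Rightarrow> ('r::ring_1, 'a) rmod" and t :: "nat \<Rightarrow> 'a \<Rightarrow> 'a"
  assumes modM: "is_rmod (M n)" and homt: "is_hom (M (Suc n)) (M n) (t n)"
begin

definition PI :: "(nat \<Rightarrow> 'a) set" where "PI = {y. \<forall>n. y n \<in> carr (M n)}"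

abbreviation "dl \<equiv> lim1_delta M t"
abbreviation "lc \<equiv> lim1_cls M t"

lemma PI_D: "y \<in> PI \<Longrightarrow> y n \<in> carr (M n)" by (simp add: PI_def)

lemma tc: "x \<in> carr (M (Suc n)) \<Longrightarrow> t n x \<in> carr (M n)" by (rule hom_carr[OF homt])

lemma dl_carr: "w \<in> PI \<Longrightarrow> dl w n \<in> carr (M n)"
  by (simp add: lim1_delta_def PI_def m_add[OF modM] m_neg[OF modM] tc)

lemma dl_add: assumes "w \<in> PI" "w' \<in> PI"
  shows "dl (\<lambda>n. madd (M n) (w n) (w' n)) n = madd (M n) (dl w n) (dl w' n)"
proof -
  have a: "w n \<in> carr (M n)" "w' n \<in> carr (M n)" "w (Suc n) \<in> carr (M (Suc n))" "w' (Suc n) \<in> carr (M (Suc n))"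
    using assms by (auto simp: PI_def)
  have b: "t n (w (Suc n)) \<in> carr (M n)" "t n (w' (Suc n)) \<in> carr (M n)" using a tc by auto
  have "t n (madd (M (Suc n)) (w (Suc n)) (w' (Suc n))) = madd (M n) (t n (w (Suc n))) (t n (w' (Suc n)))"
    using hom_add[OF homt a(3,4)] .
  then have "dl (\<lambda>n. madd (M n) (w n) (w' n)) n = madd (M n) (madd (M n) (w n) (w' n)) (madd (M n) (mneg (M n) (t n (w (Suc n)))) (mneg (M n) (t n (w' (Suc n)))))"
    unfolding lim1_delta_def using b by (simp add: m_neg_add[OF modM])
  also have "\<dots> = madd (M n) (dl w n) (dl w' n)" unfolding lim1_delta_def
    by (rule m_add_ac[OF modM a(1) a(2) m_neg[OF modM b(1)] m_neg[OF modM b(2)]])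
  finally show ?thesis .
qed

lemma dl_neg: assumes "w \<in> PI" shows "dl (\<lambda>n. mneg (M n) (w n)) n = mneg (M n) (dl w n)"
proof -
  have a: "w n \<in> carr (M n)" "w (Suc n) \<in> carr (M (Suc n))" using assms by (auto simp: PI_def)
  have b: "t n (w (Suc n)) \<in> carr (M n)" using a tc by auto
  have "t n (mneg (M (Suc n)) (w (Suc n))) = mneg (M n) (t n (w (Suc n)))"
    using hom_neg[OF modM modM homt a(2)] .
  then show ?thesis unfolding lim1_delta_def using a b
    by (simp add: m_neg_add[OF modM] m_neg[OF modM])
qed

lemma dl_smul: assumes "w \<in> PI" shows "dl (\<lambda>n. msmul (M n) r (w n)) n = msmul (M n) r (dl w n)"
proof -
  have a: "w n \<in> carr (M n)" "w (Suc n) \<in> carr (M (Suc n))" using assms by (auto simp: PI_def)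
  have b: "t n (w (Suc n)) \<in> carr (M n)" using a tc by auto
  have "t n (msmul (M (Suc n)) r (w (Suc n))) = msmul (M n) r (t n (w (Suc n)))"
    using hom_smul[OF homt a(2)] .
  then show ?thesis unfolding lim1_delta_def using a b
    by (simp add: m_smul_add[OF modM] m_neg[OF modM] m_smul_neg[OF modM])
qed

lemma PI_add: "w \<in> PI \<Longrightarrow> w' \<in> PI \<Longrightarrow> (\<lambda>n. madd (M n) (w n) (w' n)) \<in> PI"
  by (simp add: PI_def m_add[OF modM])
lemma PI_neg: "w \<in> PI \<Longrightarrow> (\<lambda>n. mneg (M n) (w n)) \<in> PI"
  by (simp add: PI_def m_neg[OF modM])
lemma PI_smul: "w \<in> PI \<Longrightarrow> (\<lambda>n. msmul (M n) r (w n)) \<in> PI"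
  by (simp add: PI_def m_smul[OF modM])
lemma PI_zero: "(\<lambda>n. mzero (M n)) \<in> PI"
  by (simp add: PI_def m_zero[OF modM])

lemma lc_mem: "z \<in> lc y \<longleftrightarrow> z \<in> PI \<and> (\<exists>w\<in>PI. \<forall>n. z n = madd (M n) (y n) (dl w n))"
  by (simp add: lim1_cls_def PI_def)

lemma dl_zero: "dl (\<lambda>n. mzero (M n)) n = mzero (M n)"
  unfolding lim1_delta_def using hom_zero[OF modM modM homt]
  by (simp add: m_neg_zero[OF modM] m_lzero[OF modM] m_zero[OF modM])

lemma self_mem: "y \<in> PI \<Longrightarrow> y \<in> lc y"
  unfolding lc_mem using PI_zero dl_zero by (auto intro!: bexI[of _ "\<lambda>n. mzero (M n)"] simp: PI_D m_rzero[OF modM])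

lemma mem_trans: assumes "y \<in> PI" "z \<in> lc y" "q \<in> lc z" shows "q \<in> lc y"
proof -
  obtain w where w: "w \<in> PI" "\<And>n. z n = madd (M n) (y n) (dl w n)" using assms lc_mem by auto
  obtain w' where w': "w' \<in> PI" "\<And>n. q n = madd (M n) (z n) (dl w' n)" using assms lc_mem by auto
  have "q n = madd (M n) (y n) (dl (\<lambda>n. madd (M n) (w n) (w' n)) n)" for n
    using w w' assms dl_add[OF w(1) w'(1)] by (simp add: m_assoc[OF modM] PI_D dl_carr)
  then show ?thesis using assms(3) lc_mem PI_add[OF w(1) w'(1)] by auto
qed

lemma mem_sym: assumes "y \<in> PI" "z \<in> lc y" shows "y \<in> lc z"
proof -
  obtain w where w: "w \<in> PI" "\<And>n. z n = madd (M n) (y n) (dl w n)" using assms lc_mem by auto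
  have "y n = madd (M n) (z n) (dl (\<lambda>n. mneg (M n) (w n)) n)" for n
  proof -
    have "madd (M n) (madd (M n) (y n) (dl w n)) (mneg (M n) (dl w n)) = madd (M n) (y n) (madd (M n) (dl w n) (mneg (M n) (dl w n)))"
      using m_assoc[OF modM PI_D[OF assms(1)] dl_carr[OF w(1)] m_neg[OF modM dl_carr[OF w(1)]]] .
    then show ?thesis using w(2)[of n] dl_neg[OF w(1), of n] m_rneg[OF modM dl_carr[OF w(1)]] m_rzero[OF modM PI_D[OF assms(1)]] by simp
  qed
  then show ?thesis using assms lc_mem PI_neg[OF w(1)] by auto
qed

lemma lc_eq: assumes "y \<in> PI" "z \<in> PI" shows "lc y = lc z \<longleftrightarrow> z \<in> lc y"
proof
  assume "lc y = lc z" then show "z \<in> lc y" using self_mem[OF assms(2)] by simp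
next
  assume a: "z \<in> lc y"
  show "lc y = lc z"
  proof (rule set_eqI)
    fix q show "q \<in> lc y \<longleftrightarrow> q \<in> lc z"
      using mem_trans[OF assms(1) a] mem_trans[OF assms(2) mem_sym[OF assms(1) a]] by blast
  qed
qed

lemma carr_lim1: "c \<in> carr (lim1 M t) \<longleftrightarrow> (\<exists>y\<in>PI. c = lc y)"
  by (auto simp: lim1_def PI_def)

lemma rep_lc: assumes "y \<in> PI" shows "rep (lc y) \<in> lc y" "rep (lc y) \<in> PI" "lc (rep (lc y)) = lc y"
proof -
  show r: "rep (lc y) \<in> lc y" using someI[of "\<lambda>p. p \<in> lc y" y] self_mem[OF assms] unfolding rep_def by blast
  then show p: "rep (lc y) \<in> PI" using lc_mem by auto
  show "lc (rep (lc y)) = lc y" using lc_eq[OF assms p] r by simp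
qed

lemma lc_add: assumes "y \<in> PI" "z \<in> PI"
  shows "madd (lim1 M t) (lc y) (lc z) = lc (\<lambda>n. madd (M n) (y n) (z n))"
proof -
  obtain w where w: "w \<in> PI" "\<And>n. rep (lc y) n = madd (M n) (y n) (dl w n)" using rep_lc[OF assms(1)] lc_mem by auto
  obtain w' where w': "w' \<in> PI" "\<And>n. rep (lc z) n = madd (M n) (z n) (dl w' n)" using rep_lc[OF assms(2)] lc_mem by auto
  have e: "madd (M n) (rep (lc y) n) (rep (lc z) n) = madd (M n) (madd (M n) (y n) (z n)) (dl (\<lambda>n. madd (M n) (w n) (w' n)) n)" for n
    using w w' assms dl_add[OF w(1) w'(1)] m_add_ac[OF modM PI_D[OF assms(1)] dl_carr[OF w(1)] PI_D[OF assms(2)] dl_carr[OF w'(1)]] by simp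
  have "(\<lambda>n. madd (M n) (rep (lc y) n) (rep (lc z) n)) \<in> lc (\<lambda>n. madd (M n) (y n) (z n))"
    unfolding lc_mem using e PI_add[OF w(1) w'(1)] PI_add[OF rep_lc(2)[OF assms(1)] rep_lc(2)[OF assms(2)]] by auto
  moreover have "lc (\<lambda>n. madd (M n) (y n) (z n)) = lc (\<lambda>n. madd (M n) (rep (lc y) n) (rep (lc z) n))"
    using lc_eq PI_add assms rep_lc(2) calculation by auto
  ultimately show ?thesis unfolding lim1_def by simp
qed

lemma lc_smul: assumes "y \<in> PI"
  shows "msmul (lim1 M t) r (lc y) = lc (\<lambda>n. msmul (M n) r (y n))"
proof -
  obtain w where w: "w \<in> PI" "\<And>n. rep (lc y) n = madd (M n) (y n) (dl w n)" using rep_lc[OF assms(1)] lc_mem by auto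
  have e: "msmul (M n) r (rep (lc y) n) = madd (M n) (msmul (M n) r (y n)) (dl (\<lambda>n. msmul (M n) r (w n)) n)" for n
    using w assms dl_smul[OF w(1)] by (simp add: m_smul_add[OF modM] PI_D dl_carr)
  have "(\<lambda>n. msmul (M n) r (rep (lc y) n)) \<in> lc (\<lambda>n. msmul (M n) r (y n))"
    unfolding lc_mem using e PI_smul[OF w(1)] PI_smul[OF rep_lc(2)[OF assms(1)]] by blast
  moreover have "lc (\<lambda>n. msmul (M n) r (y n)) = lc (\<lambda>n. msmul (M n) r (rep (lc y) n))"
    using lc_eq PI_smul assms rep_lc(2) calculation by auto
  ultimately show ?thesis unfolding lim1_def by simp
qed

end

lemma lim1_map:
  assumes T: "tower M t" and T': "tower M' t'"
    and g: "\<And>n. is_hom (M n) (M' n) (g n)"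
    and gt: "\<And>n x. x \<in> carr (M (Suc n)) \<Longrightarrow> g n (t n x) = t' n (g (Suc n) x)"
    and y: "y \<in> tower.PI M"
  shows "lim1_cls M' t' (\<lambda>n. g n (rep (lim1_cls M t y) n)) = lim1_cls M' t' (\<lambda>n. g n (y n))"
proof -
  interpret A: tower M t by fact
  interpret B: tower M' t' by fact
  obtain w where w: "w \<in> A.PI" "\<And>n. rep (A.lc y) n = madd (M n) (y n) (A.dl w n)"
    using A.rep_lc[OF y] A.lc_mem by auto
  have gw: "(\<lambda>n. g n (w n)) \<in> B.PI" "(\<lambda>n. g n (y n)) \<in> B.PI" "(\<lambda>n. g n (rep (A.lc y) n)) \<in> B.PI"
    using w y A.rep_lc(2)[OF y] g hom_carr by (fastforce simp: A.PI_def B.PI_def)+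
  have e: "g n (rep (A.lc y) n) = madd (M' n) (g n (y n)) (B.dl (\<lambda>n. g n (w n)) n)" for n
  proof -
    have a: "w n \<in> carr (M n)" "w (Suc n) \<in> carr (M (Suc n))" "y n \<in> carr (M n)" using w y A.PI_D by auto
    have "g n (A.dl w n) = B.dl (\<lambda>n. g n (w n)) n"
      unfolding lim1_delta_def
      using a A.tc[OF a(2)] hom_add[OF g] hom_neg[OF A.modM B.modM g] gt[OF a(2)] by (simp add: m_neg[OF A.modM])
    then show ?thesis using w(2) hom_add[OF g a(3) A.dl_carr[OF w(1)]] by simp
  qed
  show ?thesis using B.lc_eq[OF gw(2) gw(3)] e gw unfolding B.lc_mem by auto
qed

lemma zle_refl[simp]: "zle i i" by (cases i) auto

locale rce =
  fixes H :: "zinf \<Rightarrow> zinf \<Rightarrow> int \<Rightarrow> ('r::ring_1, 'a) rmod"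
    and eta :: "zinf \<Rightarrow> zinf \<Rightarrow> zinf \<Rightarrow> zinf \<Rightarrow> int \<Rightarrow> 'a \<Rightarrow> 'a"
    and del :: "zinf \<Rightarrow> zinf \<Rightarrow> zinf \<Rightarrow> int \<Rightarrow> 'a \<Rightarrow> 'a"
  assumes CE: "right_CE H eta del"
begin

lemma CE1: "\<forall>i j n. zle i j \<longrightarrow> is_rmod (H i j n)" using CE unfolding right_CE_def by (rule conjunct1)
lemma CE2: "\<forall>i j i' j' n. zle i j \<and> zle i' j' \<and> zle i i' \<and> zle j j' \<longrightarrow>
          is_hom (H i j n) (H i' j' n) (eta i j i' j' n)" using CE unfolding right_CE_def by (elim conjE)
lemma CE3: "\<forall>i j n. \<forall>x\<in>carr (H i j n). zle i j \<longrightarrow> eta i j i j n x = x" using CE unfolding right_CE_def by (elim conjE)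
lemma CE4: "\<forall>i j i' j' i'' j'' n. \<forall>x\<in>carr (H i j n).
          zle i j \<and> zle i' j' \<and> zle i'' j'' \<and> zle i i' \<and> zle j j' \<and> zle i' i'' \<and> zle j' j'' \<longrightarrow>
          eta i' j' i'' j'' n (eta i j i' j' n x) = eta i j i'' j'' n x" using CE unfolding right_CE_def by (elim conjE)
lemma CE5: "\<forall>i j k n. zle i j \<and> zle j k \<longrightarrow> is_hom (H j k n) (H i j (n - 1)) (del i j k n)"
  using CE unfolding right_CE_def by (elim conjE)
lemma CE6: "\<forall>i j k i' j' k' n. \<forall>x\<in>carr (H j k n).
          zle i j \<and> zle j k \<and> zle i' j' \<and> zle j' k' \<and> zle i i' \<and> zle j j' \<and> zle k k' \<longrightarrow>
          eta i j i' j' (n - 1) (del i j k n x) = del i' j' k' n (eta j k j' k' n x)" using CE unfolding right_CE_def by (elim conjE)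
lemma CE7: "\<forall>i j k n. zle i j \<and> zle j k \<longrightarrow>
          eta i j i k n ` carr (H i j n) = {y \<in> carr (H i k n). eta i k j k n y = mzero (H j k n)}
        \<and> eta i k j k n ` carr (H i k n) = {y \<in> carr (H j k n). del i j k n y = mzero (H i j (n - 1))}
        \<and> del i j k n ` carr (H j k n) = {y \<in> carr (H i j (n - 1)). eta i j i k (n - 1) y = mzero (H i k (n - 1))}"
  using CE unfolding right_CE_def by (elim conjE)

lemma modH: "zle i j \<Longrightarrow> is_rmod (H i j n)" using CE1 by blast
lemma hom_eta: "zle i j \<Longrightarrow> zle i' j' \<Longrightarrow> zle i i' \<Longrightarrow> zle j j' \<Longrightarrow> is_hom (H i j n) (H i' j' n) (eta i j i' j' n)"
  using CE2 by blast
lemma eta_id: "x \<in> carr (H i j n) \<Longrightarrow> zle i j \<Longrightarrow> eta i j i j n x = x"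
  using CE3 by blast
lemma eta_comp: "x \<in> carr (H i j n) \<Longrightarrow> zle i j \<Longrightarrow> zle i' j' \<Longrightarrow> zle i'' j'' \<Longrightarrow> zle i i' \<Longrightarrow> zle j j' \<Longrightarrow>
   zle i' i'' \<Longrightarrow> zle j' j'' \<Longrightarrow> eta i' j' i'' j'' n (eta i j i' j' n x) = eta i j i'' j'' n x"
  using CE4 by blast
lemma hom_del: "zle i j \<Longrightarrow> zle j k \<Longrightarrow> is_hom (H j k n) (H i j (n - 1)) (del i j k n)"
  using CE5 by blast
lemma del_nat: "x \<in> carr (H j k n) \<Longrightarrow> zle i j \<Longrightarrow> zle j k \<Longrightarrow> zle i' j' \<Longrightarrow> zle j' k' \<Longrightarrow> zle i i' \<Longrightarrow>
   zle j j' \<Longrightarrow> zle k k' \<Longrightarrow> eta i j i' j' (n - 1) (del i j k n x) = del i' j' k' n (eta j k j' k' n x)"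
  using CE6 by blast
lemma ex1: "zle i j \<Longrightarrow> zle j k \<Longrightarrow>
   eta i j i k n ` carr (H i j n) = {y \<in> carr (H i k n). eta i k j k n y = mzero (H j k n)}"
  using CE7 by blast
lemma ex2: "zle i j \<Longrightarrow> zle j k \<Longrightarrow>
   eta i k j k n ` carr (H i k n) = {y \<in> carr (H j k n). del i j k n y = mzero (H i j (n - 1))}"
  using CE7 by blast
lemma ex3: "zle i j \<Longrightarrow> zle j k \<Longrightarrow>
   del i j k n ` carr (H j k n) = {y \<in> carr (H i j (n - 1)). eta i j i k (n - 1) y = mzero (H i k (n - 1))}"
  using CE7 by blast

lemma eta_carr: "x \<in> carr (H i j n) \<Longrightarrow> zle i j \<Longrightarrow> zle i' j' \<Longrightarrow> zle i i' \<Longrightarrow> zle j j' \<Longrightarrow> eta i j i' j' n x \<in> carr (H i' j' n)"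
  using hom_carr[OF hom_eta] by blast
lemma del_carr: "x \<in> carr (H j k n) \<Longrightarrow> zle i j \<Longrightarrow> zle j k \<Longrightarrow> del i j k n x \<in> carr (H i j (n - 1))"
  using hom_carr[OF hom_del] by blast
lemma eta0: "zle i j \<Longrightarrow> zle i' j' \<Longrightarrow> zle i i' \<Longrightarrow> zle j j' \<Longrightarrow> eta i j i' j' n (mzero (H i j n)) = mzero (H i' j' n)"
  using hom_zero[OF modH modH hom_eta] by blast
lemma del0: "zle i j \<Longrightarrow> zle j k \<Longrightarrow> del i j k n (mzero (H j k n)) = mzero (H i j (n - 1))"
  using hom_zero[OF modH modH hom_del] by blast
lemma eta_add: "x \<in> carr (H i j n) \<Longrightarrow> y \<in> carr (H i j n) \<Longrightarrow> zle i j \<Longrightarrow> zle i' j' \<Longrightarrow> zle i i' \<Longrightarrow> zle j j' \<Longrightarrow>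
   eta i j i' j' n (madd (H i j n) x y) = madd (H i' j' n) (eta i j i' j' n x) (eta i j i' j' n y)"
  using hom_add[OF hom_eta] by blast
lemma del_add: "x \<in> carr (H j k n) \<Longrightarrow> y \<in> carr (H j k n) \<Longrightarrow> zle i j \<Longrightarrow> zle j k \<Longrightarrow>
   del i j k n (madd (H j k n) x y) = madd (H i j (n - 1)) (del i j k n x) (del i j k n y)"
  using hom_add[OF hom_del] by blast
lemma eta_smul: "x \<in> carr (H i j n) \<Longrightarrow> zle i j \<Longrightarrow> zle i' j' \<Longrightarrow> zle i i' \<Longrightarrow> zle j j' \<Longrightarrow>
   eta i j i' j' n (msmul (H i j n) r x) = msmul (H i' j' n) r (eta i j i' j' n x)"
  using hom_smul[OF hom_eta] by blast
lemma del_smul: "x \<in> carr (H j k n) \<Longrightarrow> zle i j \<Longrightarrow> zle j k \<Longrightarrow>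
   del i j k n (msmul (H j k n) r x) = msmul (H i j (n - 1)) r (del i j k n x)"
  using hom_smul[OF hom_del] by blast
lemma eta_neg: "x \<in> carr (H i j n) \<Longrightarrow> zle i j \<Longrightarrow> zle i' j' \<Longrightarrow> zle i i' \<Longrightarrow> zle j j' \<Longrightarrow>
   eta i j i' j' n (mneg (H i j n) x) = mneg (H i' j' n) (eta i j i' j' n x)"
  using hom_neg[OF modH modH hom_eta] by blast
lemma del_neg: "x \<in> carr (H j k n) \<Longrightarrow> zle i j \<Longrightarrow> zle j k \<Longrightarrow>
   del i j k n (mneg (H j k n) x) = mneg (H i j (n - 1)) (del i j k n x)"
  using hom_neg[OF modH modH hom_del] by blast

lemma HH_zero: assumes "x \<in> carr (H i i n)" shows "x = mzero (H i i n)"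
proof -
  have "x \<in> eta i i i i n ` carr (H i i n)" using assms eta_id[OF assms] by (metis image_eqI zle_refl)
  then show ?thesis using ex1[of i i i n] eta_id[OF assms] by auto
qed

section \<open>The right couple\<close>

lemma push_al: assumes "x \<in> carr (H (Fin s) PInf n)" "s \<le> u"
  shows "push (alcpl eta n) s u x = eta (Fin s) PInf (Fin u) PInf n x"
  using assms(2)
proof (induction rule: push_induct)
  case base then show ?case using eta_id[OF assms(1)] by simp
next
  case (step v)
  then show ?case using eta_comp[OF assms(1), of "Fin v" PInf "Fin (v+1)" PInf] eta_carr[OF assms(1)]
    by (simp add: push_step alcpl_def)
qed

lemma dsysA: "dsys (Acpl H n) (alcpl eta n) UNIV"
  by unfold_locales (auto simp: Acpl_def alcpl_def intro: eta_carr)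

definition Kin :: "int \<Rightarrow> nat \<Rightarrow> int \<Rightarrow> 'a set" where
  "Kin n r s = {x \<in> carr (H (Fin s) PInf n).
      del (Fin (s - int r)) (Fin s) PInf n x = mzero (H (Fin (s - int r)) (Fin s) (n - 1))
    \<and> (\<exists>u\<ge>s. eta (Fin s) PInf (Fin u) PInf n x = mzero (H (Fin u) PInf n))}"

lemma kill_mono: assumes "x \<in> carr (H (Fin s) PInf n)" "s \<le> u" "u \<le> u'"
  "eta (Fin s) PInf (Fin u) PInf n x = mzero (H (Fin u) PInf n)"
  shows "eta (Fin s) PInf (Fin u') PInf n x = mzero (H (Fin u') PInf n)"
  using eta_comp[OF assms(1), of "Fin u" PInf "Fin u'" PInf] eta0[of "Fin u" PInf "Fin u'" PInf n] assms by simp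

lemma Kinf_eq: "Kinf_imr (Acpl H n) (alcpl eta n) r s = Kin n r s"
proof -
  interpret A: dsys "Acpl H n" "alcpl eta n" UNIV by (rule dsysA)
  have io: "iota (Acpl H n) (alcpl eta n) s x = mzero (colim (Acpl H n) (alcpl eta n) UNIV) \<longleftrightarrow>
      (\<exists>u\<ge>s. eta (Fin s) PInf (Fin u) PInf n x = mzero (H (Fin u) PInf n))"
    if x: "x \<in> carr (H (Fin s) PInf n)" for x
  proof -
    have tz: "\<And>k. k - 1 \<in> UNIV \<Longrightarrow> alcpl eta n k (mzero (Acpl H n (k - 1))) = mzero (Acpl H n k)"
      by (simp add: Acpl_def alcpl_def eta0)
    have zc: "\<And>j. j \<in> UNIV \<Longrightarrow> mzero (Acpl H n j) \<in> carr (Acpl H n j)"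
      by (simp add: Acpl_def m_zero modH)
    show ?thesis unfolding iota_def using A.cls_zero[OF tz zc, of s x] x push_al[OF x]
      by (auto simp: Acpl_def)
  qed
  have im: "imr (Acpl H n) (alcpl eta n) r s = eta (Fin (s - int r)) PInf (Fin s) PInf n ` carr (H (Fin (s - int r)) PInf n)"
  proof -
    have "iter (alcpl eta n) (s - int r) r y = eta (Fin (s - int r)) PInf (Fin s) PInf n y"
      if "y \<in> carr (H (Fin (s - int r)) PInf n)" for y
      using push_al[OF that, of s] by (simp add: push_def)
    then show ?thesis unfolding imr_def Acpl_def by (auto simp: image_def)
  qed
  have ca: "carr (Acpl H n s) = carr (H (Fin s) PInf n)" by (simp add: Acpl_def)
  show ?thesis unfolding Kinf_imr_def Kin_def im ex2[of "Fin (s - int r)" "Fin s" PInf n, simplified] ca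
    using io by auto
qed

lemma Kin_carr: "x \<in> Kin n r s \<Longrightarrow> x \<in> carr (H (Fin s) PInf n)" by (simp add: Kin_def)

lemma Kin_zero: "mzero (H (Fin s) PInf n) \<in> Kin n r s"
  unfolding Kin_def using m_zero[OF modH] del0 eta0 by auto

lemma Kin_add: assumes "x \<in> Kin n r s" "y \<in> Kin n r s" shows "madd (H (Fin s) PInf n) x y \<in> Kin n r s"
proof -
  have c: "x \<in> carr (H (Fin s) PInf n)" "y \<in> carr (H (Fin s) PInf n)" using assms Kin_carr by auto
  obtain u1 u2 where u: "s \<le> u1" "eta (Fin s) PInf (Fin u1) PInf n x = mzero (H (Fin u1) PInf n)"
    "s \<le> u2" "eta (Fin s) PInf (Fin u2) PInf n y = mzero (H (Fin u2) PInf n)" using assms unfolding Kin_def by auto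
  let ?u = "max u1 u2"
  have "eta (Fin s) PInf (Fin ?u) PInf n x = mzero (H (Fin ?u) PInf n)"
       "eta (Fin s) PInf (Fin ?u) PInf n y = mzero (H (Fin ?u) PInf n)"
    using kill_mono[OF c(1) u(1) _ u(2)] kill_mono[OF c(2) u(3) _ u(4)] by auto
  then show ?thesis using assms c u unfolding Kin_def
    by (auto simp: del_add eta_add m_add[OF modH] m_lzero[OF modH] m_zero[OF modH] intro!: exI[of _ ?u])
qed

lemma Kin_neg: assumes "x \<in> Kin n r s" shows "mneg (H (Fin s) PInf n) x \<in> Kin n r s"
  using assms unfolding Kin_def by (auto simp: del_neg eta_neg m_neg[OF modH] m_neg_zero[OF modH])

lemma Kin_smul: assumes "x \<in> Kin n r s" shows "msmul (H (Fin s) PInf n) c x \<in> Kin n r s"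
  using assms unfolding Kin_def by (auto simp: del_smul eta_smul m_smul[OF modH] m_smul_zero[OF modH])

lemma Kin_Suc: assumes "x \<in> Kin n (Suc r) s" shows "x \<in> Kin n r s"
proof -
  have c: "x \<in> carr (H (Fin s) PInf n)" using assms Kin_carr by auto
  have "del (Fin (s - int r)) (Fin s) PInf n x = eta (Fin (s - int (Suc r))) (Fin s) (Fin (s - int r)) (Fin s) (n - 1)
      (del (Fin (s - int (Suc r))) (Fin s) PInf n x)"
    using del_nat[OF c, of "Fin (s - int (Suc r))" "Fin (s - int r)" "Fin s" PInf] eta_id[OF c] by simp
  then show ?thesis using assms eta0 unfolding Kin_def by auto
qed

lemma Kin_al: assumes "x \<in> Kin n r (s - 1)" shows "eta (Fin (s - 1)) PInf (Fin s) PInf n x \<in> Kin n r s"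
proof -
  have c: "x \<in> carr (H (Fin (s - 1)) PInf n)" using assms Kin_carr by auto
  obtain u where u: "s - 1 \<le> u" "eta (Fin (s - 1)) PInf (Fin u) PInf n x = mzero (H (Fin u) PInf n)"
    using assms unfolding Kin_def by auto
  let ?u = "max u s"
  have k: "eta (Fin s) PInf (Fin ?u) PInf n (eta (Fin (s - 1)) PInf (Fin s) PInf n x) = mzero (H (Fin ?u) PInf n)"
    using kill_mono[OF c u(1) _ u(2), of ?u] eta_comp[OF c, of "Fin s" PInf "Fin ?u" PInf] by simp
  have "del (Fin (s - int r)) (Fin s) PInf n (eta (Fin (s - 1)) PInf (Fin s) PInf n x) =
     eta (Fin (s - 1 - int r)) (Fin (s - 1)) (Fin (s - int r)) (Fin s) (n - 1) (del (Fin (s - 1 - int r)) (Fin (s - 1)) PInf n x)"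
    using del_nat[OF c, of "Fin (s - 1 - int r)" "Fin (s - int r)" "Fin s" PInf] by simp
  then show ?thesis using assms eta0 k eta_carr[OF c, of "Fin s" PInf] unfolding Kin_def
    by (auto intro!: exI[of _ ?u])
qed

definition KT :: "int \<Rightarrow> int \<Rightarrow> nat \<Rightarrow> ('r, 'a) rmod" where
  "KT n s r = (H (Fin s) PInf n)\<lparr>carr := Kin n r s\<rparr>"

lemma Ktower_eq: "Ktower (Acpl H n) (alcpl eta n) s = KT n s"
  by (rule ext) (simp add: Ktower_def KT_def Kinf_eq Acpl_def)

lemma KT_mod: "is_rmod (KT n s r)"
  unfolding KT_def by (rule submod) (auto simp: modH Kin_carr Kin_zero Kin_add Kin_neg Kin_smul)

lemma towerK: "tower (KT n s) (\<lambda>r x. x)"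
  apply unfold_locales apply (rule KT_mod) by (auto simp: is_hom_def KT_def Kin_Suc)

end

context rce begin

definition PL :: "int \<Rightarrow> int \<Rightarrow> int \<Rightarrow> (int \<Rightarrow> 'a) \<Rightarrow> int \<Rightarrow> 'a" where
  "PL m j u x = (\<lambda>i. if i \<le> u then eta (Fin (min i j)) (Fin j) (Fin i) (Fin u) m (x (min i j)) else undefined)"

lemma LimH_mem: "x \<in> carr (LimH H eta m j) \<longleftrightarrow> (\<forall>i\<le>j. x i \<in> carr (H (Fin i) (Fin j) m))
   \<and> (\<forall>i\<le>j. eta (Fin (i - 1)) (Fin j) (Fin i) (Fin j) m (x (i - 1)) = x i) \<and> (\<forall>i. \<not> i \<le> j \<longrightarrow> x i = undefined)"
  by (auto simp: LimH_def ilim_def)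

lemma LimH_compat: assumes x: "x \<in> carr (LimH H eta m j)" and "i \<le> i'" "i' \<le> j"
  shows "eta (Fin i) (Fin j) (Fin i') (Fin j) m (x i) = x i'"
proof -
  have "i' \<le> j \<longrightarrow> eta (Fin i) (Fin j) (Fin i') (Fin j) m (x i) = x i'" using assms(2)
  proof (induction rule: push_induct)
    case base then show ?case using x eta_id by (simp add: LimH_mem)
  next
    case (step v)
    show ?case
    proof
      assume v: "v + 1 \<le> j"
      have xi: "x i \<in> carr (H (Fin i) (Fin j) m)" using x v step by (simp add: LimH_mem)
      have "eta (Fin i) (Fin j) (Fin (v + 1)) (Fin j) m (x i) = eta (Fin v) (Fin j) (Fin (v + 1)) (Fin j) m (eta (Fin i) (Fin j) (Fin v) (Fin j) m (x i))"
        using eta_comp[OF xi, of "Fin v" "Fin j" "Fin (v+1)" "Fin j"] step v by simp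
      also have "\<dots> = x (v + 1)"
      proof -
        have h: "\<forall>i\<le>j. eta (Fin (i - 1)) (Fin j) (Fin i) (Fin j) m (x (i - 1)) = x i" using x by (simp add: LimH_mem)
        show ?thesis using h[rule_format, of "v+1"] v step by simp
      qed
      finally show "eta (Fin i) (Fin j) (Fin (v + 1)) (Fin j) m (x i) = x (v + 1)" .
    qed
  qed
  then show ?thesis using assms by simp
qed

lemma PL_carr: assumes x: "x \<in> carr (LimH H eta m j)" and ju: "j \<le> u" shows "PL m j u x \<in> carr (LimH H eta m u)"
proof -
  have xc: "x i \<in> carr (H (Fin i) (Fin j) m)" if "i \<le> j" for i using x that by (simp add: LimH_mem)
  have c: "PL m j u x i \<in> carr (H (Fin i) (Fin u) m)" if "i \<le> u" for i
    using that ju xc[of "min i j"] by (auto simp: PL_def intro!: eta_carr)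
  have comp: "eta (Fin (i - 1)) (Fin u) (Fin i) (Fin u) m (PL m j u x (i - 1)) = PL m j u x i" if i: "i \<le> u" for i
  proof (cases "i \<le> j")
    case True
    have x1: "x (i - 1) \<in> carr (H (Fin (i - 1)) (Fin j) m)" using xc True by simp
    have "eta (Fin (i - 1)) (Fin u) (Fin i) (Fin u) m (PL m j u x (i - 1)) = eta (Fin (i - 1)) (Fin j) (Fin i) (Fin u) m (x (i - 1))"
      using True i ju eta_comp[OF x1, of "Fin (i - 1)" "Fin u" "Fin i" "Fin u"] by (simp add: PL_def)
    also have "\<dots> = eta (Fin i) (Fin j) (Fin i) (Fin u) m (eta (Fin (i - 1)) (Fin j) (Fin i) (Fin j) m (x (i - 1)))"
      using True i ju eta_comp[OF x1, of "Fin i" "Fin j" "Fin i" "Fin u"] by simp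
    also have "\<dots> = PL m j u x i" using True i x by (simp add: LimH_mem PL_def)
    finally show ?thesis .
  next
    case False
    have x1: "x j \<in> carr (H (Fin j) (Fin j) m)" using xc by simp
    have e1: "min (i - 1) j = j" "min i j = j" using False by auto
    show ?thesis using False i ju eta_comp[OF x1, of "Fin (i - 1)" "Fin u" "Fin i" "Fin u"] by (simp add: PL_def e1)
  qed
  show ?thesis unfolding LimH_mem using c comp by (simp add: PL_def)
qed

lemma PL_self: assumes x: "x \<in> carr (LimH H eta m j)" shows "PL m j j x = x"
  using x by (auto simp: PL_def LimH_mem eta_id fun_eq_iff)

lemma PL_PL: assumes x: "x \<in> carr (LimH H eta m j)" and "j \<le> v" "v \<le> u" shows "PL m v u (PL m j v x) = PL m j u x"
proof (rule ext)
  fix i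
  have xc: "x (min i j) \<in> carr (H (Fin (min i j)) (Fin j) m)" using x by (simp add: LimH_mem)
  have e: "min (min i v) j = min i j" using assms by auto
  show "PL m v u (PL m j v x) i = PL m j u x i"
    using assms eta_comp[OF xc, of "Fin (min i v)" "Fin v" "Fin i" "Fin u"] by (auto simp: PL_def e)
qed

lemma LimH_tr_PL: "LimH_tr eta m k x = PL m (k - 1) k x"
  by (simp add: LimH_tr_def PL_def)

lemma dsysCL: "dsys (LimH H eta m) (LimH_tr eta m) UNIV"
  by unfold_locales (auto simp: LimH_tr_PL intro!: PL_carr)

lemma push_CL: assumes x: "x \<in> carr (LimH H eta m j)" and "j \<le> u" shows "push (LimH_tr eta m) j u x = PL m j u x"
  using assms(2)
proof (induction rule: push_induct)
  case base then show ?case using PL_self[OF x] by simp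
next
  case (step v)
  then show ?case using PL_PL[OF x step(1), of "v+1"] by (simp add: push_step LimH_tr_PL)
qed

lemma PL_add: assumes x: "x \<in> carr (LimH H eta m j)" and y: "y \<in> carr (LimH H eta m j)" and "j \<le> u"
  shows "PL m j u (madd (LimH H eta m j) x y) = madd (LimH H eta m u) (PL m j u x) (PL m j u y)"
proof (rule ext)
  fix i
  have xc: "x (min i j) \<in> carr (H (Fin (min i j)) (Fin j) m)" "y (min i j) \<in> carr (H (Fin (min i j)) (Fin j) m)"
    using x y by (auto simp: LimH_mem)
  show "PL m j u (madd (LimH H eta m j) x y) i = madd (LimH H eta m u) (PL m j u x) (PL m j u y) i"
    using assms xc by (auto simp: PL_def LimH_def ilim_def eta_add)
qed

lemma PL_smul: assumes x: "x \<in> carr (LimH H eta m j)" and "j \<le> u"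
  shows "PL m j u (msmul (LimH H eta m j) r x) = msmul (LimH H eta m u) r (PL m j u x)"
proof (rule ext)
  fix i
  have xc: "x (min i j) \<in> carr (H (Fin (min i j)) (Fin j) m)"
    using x by (auto simp: LimH_mem)
  show "PL m j u (msmul (LimH H eta m j) r x) i = msmul (LimH H eta m u) r (PL m j u x) i"
    using assms xc by (auto simp: PL_def LimH_def ilim_def eta_smul)
qed

lemma LimH_add_carr: "x \<in> carr (LimH H eta m j) \<Longrightarrow> y \<in> carr (LimH H eta m j) \<Longrightarrow> madd (LimH H eta m j) x y \<in> carr (LimH H eta m j)"
  unfolding LimH_mem by (auto simp: LimH_def ilim_def eta_add m_add[OF modH])

lemma LimH_smul_carr: "x \<in> carr (LimH H eta m j) \<Longrightarrow> msmul (LimH H eta m j) r x \<in> carr (LimH H eta m j)"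
  unfolding LimH_mem by (auto simp: LimH_def ilim_def eta_smul m_smul[OF modH])

abbreviation "clsCL m \<equiv> colim_cls (LimH H eta m) (LimH_tr eta m) UNIV"

lemma CL_add: assumes "x \<in> carr (LimH H eta m j)" "y \<in> carr (LimH H eta m k)" "j \<le> u" "k \<le> u"
  shows "madd (ColimLim H eta m) (clsCL m (j, x)) (clsCL m (k, y)) = clsCL m (u, madd (LimH H eta m u) (PL m j u x) (PL m k u y))"
proof -
  interpret D: dsys "LimH H eta m" "LimH_tr eta m" UNIV by (rule dsysCL)
  show ?thesis unfolding ColimLim_def
    using D.cls_add[of j k x y u] assms push_CL LimH_tr_PL PL_add LimH_add_carr by auto
qed

lemma CL_smul: assumes "x \<in> carr (LimH H eta m j)"
  shows "msmul (ColimLim H eta m) r (clsCL m (j, x)) = clsCL m (j, msmul (LimH H eta m j) r x)"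
proof -
  interpret D: dsys "LimH H eta m" "LimH_tr eta m" UNIV by (rule dsysCL)
  show ?thesis unfolding ColimLim_def
    using D.cls_smul[of r j x] assms LimH_tr_PL PL_smul LimH_smul_carr by auto
qed

lemma CL_eq: assumes "x \<in> carr (LimH H eta m j)" "y \<in> carr (LimH H eta m k)"
  shows "clsCL m (j, x) = clsCL m (k, y) \<longleftrightarrow> (\<exists>u. j \<le> u \<and> k \<le> u \<and> PL m j u x = PL m k u y)"
proof -
  interpret D: dsys "LimH H eta m" "LimH_tr eta m" UNIV by (rule dsysCL)
  show ?thesis using D.cls_eq[of j k x y] assms push_CL by auto
qed

lemma dsysCH: "dsys (\<lambda>p. H (Fin i) (Fin p) m) (\<lambda>p. eta (Fin i) (Fin (p - 1)) (Fin i) (Fin p) m) {i..}"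
  by unfold_locales (auto intro!: eta_carr)

lemma push_CH: assumes x: "x \<in> carr (H (Fin i) (Fin p) m)" and "i \<le> p" "p \<le> u"
  shows "push (\<lambda>p. eta (Fin i) (Fin (p - 1)) (Fin i) (Fin p) m) p u x = eta (Fin i) (Fin p) (Fin i) (Fin u) m x"
  using assms(3)
proof (induction rule: push_induct)
  case base then show ?case using eta_id[OF x] assms by simp
next
  case (step v)
  then show ?case using eta_comp[OF x, of "Fin i" "Fin v" "Fin i" "Fin (v+1)"] assms by (simp add: push_step)
qed

lemma CH_zero: assumes x: "x \<in> carr (H (Fin i) (Fin p) m)" and "i \<le> p"
  shows "ColimH_cls H eta m i (p, x) = mzero (ColimH H eta m i) \<longleftrightarrow>
     (\<exists>u\<ge>p. eta (Fin i) (Fin p) (Fin i) (Fin u) m x = mzero (H (Fin i) (Fin u) m))"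
proof -
  interpret D: dsys "\<lambda>p. H (Fin i) (Fin p) m" "\<lambda>p. eta (Fin i) (Fin (p - 1)) (Fin i) (Fin p) m" "{i..}" by (rule dsysCH)
  have "D.cls (p, x) = mzero (ColimH H eta m i) \<longleftrightarrow> (\<exists>u\<ge>p. push (\<lambda>p. eta (Fin i) (Fin (p - 1)) (Fin i) (Fin p) m) p u x = mzero (H (Fin i) (Fin u) m))"
    unfolding ColimH_def using D.cls_zero[of p x] assms by (auto simp: eta0 m_zero[OF modH])
  then show ?thesis unfolding ColimH_cls_def using push_CH[OF x assms(2)] by auto
qed

definition KF :: "int \<Rightarrow> int \<Rightarrow> (int \<Rightarrow> 'a) \<Rightarrow> int \<Rightarrow> (int \<times> 'a) set" where
  "KF m j x = (\<lambda>i. ColimH_cls H eta m i (max i j, eta (Fin (min i j)) (Fin j) (Fin i) (Fin (max i j)) m (x (min i j))))"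

lemma kappa_cls: assumes x: "x \<in> carr (LimH H eta m j)"
  shows "kappa H eta m (clsCL m (j, x)) = KF m j x"
proof -
  interpret D: dsys "LimH H eta m" "LimH_tr eta m" UNIV by (rule dsysCL)
  obtain j' x' where r: "rep (clsCL m (j, x)) = (j', x')" by (metis prod.exhaust)
  note R = D.rep_cls[OF UNIV_I x r]
  obtain u0 where u0: "j \<le> u0" "j' \<le> u0" "PL m j u0 x = PL m j' u0 x'"
    using R CL_eq[OF x R(2)] by auto
  have "KF m j' x' i = KF m j x i" for i
  proof -
    interpret C: dsys "\<lambda>p. H (Fin i) (Fin p) m" "\<lambda>p. eta (Fin i) (Fin (p - 1)) (Fin i) (Fin p) m" "{i..}" by (rule dsysCH)
    define u where "u = max u0 i"
    have xc: "x (min i j) \<in> carr (H (Fin (min i j)) (Fin j) m)" using x by (simp add: LimH_mem)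
    have xc': "x' (min i j') \<in> carr (H (Fin (min i j')) (Fin j') m)" using R(2) by (simp add: LimH_mem)
    have "PL m j u x = PL m j' u x'"
      using u0 PL_PL[OF x u0(1), of u] PL_PL[OF R(2) u0(2), of u] by (simp add: u_def)
    then have e: "eta (Fin (min i j)) (Fin j) (Fin i) (Fin u) m (x (min i j)) = eta (Fin (min i j')) (Fin j') (Fin i) (Fin u) m (x' (min i j'))"
      unfolding PL_def u_def by (metis max.cobounded2)
    have c1: "eta (Fin (min i j)) (Fin j) (Fin i) (Fin (max i j)) m (x (min i j)) \<in> carr (H (Fin i) (Fin (max i j)) m)"
      using xc by (auto intro!: eta_carr)
    have c2: "eta (Fin (min i j')) (Fin j') (Fin i) (Fin (max i j')) m (x' (min i j')) \<in> carr (H (Fin i) (Fin (max i j')) m)"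
      using xc' by (auto intro!: eta_carr)
    have p1: "push (\<lambda>p. eta (Fin i) (Fin (p - 1)) (Fin i) (Fin p) m) (max i j) u (eta (Fin (min i j)) (Fin j) (Fin i) (Fin (max i j)) m (x (min i j)))
        = eta (Fin (min i j)) (Fin j) (Fin i) (Fin u) m (x (min i j))"
      using push_CH[OF c1, of u] eta_comp[OF xc, of "Fin i" "Fin (max i j)" "Fin i" "Fin u"] u0 by (auto simp: u_def)
    have p2: "push (\<lambda>p. eta (Fin i) (Fin (p - 1)) (Fin i) (Fin p) m) (max i j') u (eta (Fin (min i j')) (Fin j') (Fin i) (Fin (max i j')) m (x' (min i j')))
        = eta (Fin (min i j')) (Fin j') (Fin i) (Fin u) m (x' (min i j'))"
      using push_CH[OF c2, of u] eta_comp[OF xc', of "Fin i" "Fin (max i j')" "Fin i" "Fin u"] u0 by (auto simp: u_def)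
    show ?thesis unfolding KF_def ColimH_cls_def
      using C.cls_eq[of "max i j'" "max i j"] c1 c2 p1 p2 e u0 by (auto simp: u_def intro!: exI[of _ u])
  qed
  then show ?thesis using r by (simp add: kappa_def KF_def[symmetric] fun_eq_iff)
qed

lemma ker_iff: assumes x: "x \<in> carr (LimH H eta m j)"
  shows "clsCL m (j, x) \<in> carr (ker_kappa H eta m) \<longleftrightarrow>
     (\<forall>i\<le>j. \<exists>u\<ge>j. eta (Fin i) (Fin j) (Fin i) (Fin u) m (x i) = mzero (H (Fin i) (Fin u) m))"
proof -
  interpret D: dsys "LimH H eta m" "LimH_tr eta m" UNIV by (rule dsysCL)
  have inc: "clsCL m (j, x) \<in> carr (ColimLim H eta m)" unfolding ColimLim_def using D.cls_in[of j x] x by simp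
  have xc: "x i \<in> carr (H (Fin i) (Fin j) m)" if "i \<le> j" for i using x that by (simp add: LimH_mem)
  have z: "mzero (LimColim H eta m) = (\<lambda>i. mzero (ColimH H eta m i))" by (simp add: LimColim_def ilim_def)
  have kz: "KF m j x i = mzero (ColimH H eta m i) \<longleftrightarrow>
     (\<exists>u\<ge>max i j. eta (Fin (min i j)) (Fin j) (Fin i) (Fin u) m (x (min i j)) = mzero (H (Fin i) (Fin u) m))" for i
  proof -
    have c: "eta (Fin (min i j)) (Fin j) (Fin i) (Fin (max i j)) m (x (min i j)) \<in> carr (H (Fin i) (Fin (max i j)) m)"
      using xc[of "min i j"] by (auto intro!: eta_carr)
    have "eta (Fin i) (Fin (max i j)) (Fin i) (Fin u) m (eta (Fin (min i j)) (Fin j) (Fin i) (Fin (max i j)) m (x (min i j)))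
       = eta (Fin (min i j)) (Fin j) (Fin i) (Fin u) m (x (min i j))" if "max i j \<le> u" for u
      using eta_comp[OF xc[of "min i j"], of "Fin i" "Fin (max i j)" "Fin i" "Fin u"] that by auto
    then show ?thesis unfolding KF_def using CH_zero[OF c] by auto
  qed
  have "kappa H eta m (clsCL m (j, x)) = mzero (LimColim H eta m) \<longleftrightarrow>
      (\<forall>i. \<exists>u\<ge>max i j. eta (Fin (min i j)) (Fin j) (Fin i) (Fin u) m (x (min i j)) = mzero (H (Fin i) (Fin u) m))"
    unfolding kappa_cls[OF x] z fun_eq_iff kz ..
  also have "\<dots> \<longleftrightarrow> (\<forall>i\<le>j. \<exists>u\<ge>j. eta (Fin i) (Fin j) (Fin i) (Fin u) m (x i) = mzero (H (Fin i) (Fin u) m))"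
  proof
    assume "\<forall>i. \<exists>u\<ge>max i j. eta (Fin (min i j)) (Fin j) (Fin i) (Fin u) m (x (min i j)) = mzero (H (Fin i) (Fin u) m)"
    then show "\<forall>i\<le>j. \<exists>u\<ge>j. eta (Fin i) (Fin j) (Fin i) (Fin u) m (x i) = mzero (H (Fin i) (Fin u) m)"
      by (metis max.absorb2 min.absorb1)
  next
    assume a: "\<forall>i\<le>j. \<exists>u\<ge>j. eta (Fin i) (Fin j) (Fin i) (Fin u) m (x i) = mzero (H (Fin i) (Fin u) m)"
    show "\<forall>i. \<exists>u\<ge>max i j. eta (Fin (min i j)) (Fin j) (Fin i) (Fin u) m (x (min i j)) = mzero (H (Fin i) (Fin u) m)"
    proof
      fix i show "\<exists>u\<ge>max i j. eta (Fin (min i j)) (Fin j) (Fin i) (Fin u) m (x (min i j)) = mzero (H (Fin i) (Fin u) m)"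
      proof (cases "i \<le> j")
        case True then show ?thesis using a by (simp add: max_def min_def)
      next
        case False
        have "x j = mzero (H (Fin j) (Fin j) m)" using HH_zero xc[of j] by simp
        then show ?thesis using False eta0[of "Fin j" "Fin j" "Fin i" "Fin i" m]
          by (auto simp: max_def min_def intro!: exI[of _ i])
      qed
    qed
  qed
  finally show ?thesis using inc by (simp add: ker_kappa_def kerm_def)
qed

end

fun psum :: "('r, 'a) rmod \<Rightarrow> (nat \<Rightarrow> 'a) \<Rightarrow> nat \<Rightarrow> 'a" where
  "psum M a 0 = mzero M"
| "psum M a (Suc k) = madd M (psum M a k) (a k)"

context fixes M :: "('r::ring_1, 'a) rmod" assumes M: "is_rmod M"
begin

lemma psum_carr: "(\<And>r. a r \<in> carr M) \<Longrightarrow> psum M a k \<in> carr M"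
  by (induction k) (auto simp: m_zero[OF M] m_add[OF M])

lemma psum_add: assumes "\<And>r. a r \<in> carr M" "\<And>r. b r \<in> carr M"
  shows "psum M (\<lambda>r. madd M (a r) (b r)) k = madd M (psum M a k) (psum M b k)"
proof (induction k)
  case 0 then show ?case by (simp add: m_lzero[OF M] m_zero[OF M])
next
  case (Suc k)
  have "madd M (madd M (psum M a k) (psum M b k)) (madd M (a k) (b k)) = madd M (madd M (psum M a k) (a k)) (madd M (psum M b k) (b k))"
    by (rule m_add_ac[OF M psum_carr[OF assms(1)] psum_carr[OF assms(2)] assms(1) assms(2)])
  then show ?case using Suc by simp
qed

lemma psum_neg: assumes "\<And>r. a r \<in> carr M"
  shows "psum M (\<lambda>r. mneg M (a r)) k = mneg M (psum M a k)"
  by (induction k) (simp_all add: m_neg_zero[OF M] m_neg_add[OF M] psum_carr assms)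

lemma psum_smul: assumes "\<And>r. a r \<in> carr M"
  shows "psum M (\<lambda>r. msmul M c (a r)) k = msmul M c (psum M a k)"
  by (induction k) (simp_all add: m_smul_zero[OF M] m_smul_add[OF M] psum_carr assms)

lemma psum_tel: assumes "\<And>r. w r \<in> carr M"
  shows "psum M (\<lambda>r. madd M (w r) (mneg M (w (Suc r)))) k = madd M (w 0) (mneg M (w k))"
proof (induction k)
  case 0 then show ?case using assms by (simp add: m_rneg[OF M])
next
  case (Suc k)
  have "madd M (madd M (w 0) (mneg M (w k))) (madd M (w k) (mneg M (w (Suc k))))
      = madd M (w 0) (madd M (madd M (mneg M (w k)) (w k)) (mneg M (w (Suc k))))"
    using assms by (simp add: m_assoc[OF M] m_neg[OF M] m_add[OF M])
  also have "\<dots> = madd M (w 0) (mneg M (w (Suc k)))" using assms by (simp add: m_lneg[OF M] m_lzero[OF M] m_neg[OF M])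
  finally show ?case using Suc by simp
qed

lemma psum_stable:
  assumes N: "is_rmod N" and F: "\<And>x y. x \<in> carr M \<Longrightarrow> y \<in> carr M \<Longrightarrow> F (madd M x y) = madd N (F x) (F y)"
    and Fc: "\<And>x. x \<in> carr M \<Longrightarrow> F x \<in> carr N"
    and a: "\<And>r. a r \<in> carr M" and z: "\<And>r. k0 \<le> r \<Longrightarrow> F (a r) = mzero N" and k: "k0 \<le> k"
  shows "F (psum M a k) = F (psum M a k0)"
  using k
proof (induction k)
  case 0 then show ?case by simp
next
  case (Suc k)
  show ?case
  proof (cases "k0 \<le> k")
    case True
    then show ?thesis using Suc F[OF psum_carr[OF a] a] z[OF True] m_rzero[OF N Fc[OF psum_carr[OF a]]] by simp
  next
    case False then have "k0 = Suc k" using Suc by simp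
    then show ?thesis by simp
  qed
qed

end

lemma psum_hom: assumes "is_rmod M" "is_rmod N" "is_hom M N F" "\<And>r. a r \<in> carr M"
  shows "F (psum M a k) = psum N (\<lambda>r. F (a r)) k"
  by (induction k) (simp_all add: hom_zero[OF assms(1-3)] hom_add[OF assms(3)] psum_carr[OF assms(1)] assms(4))

definition phix :: "(zinf \<Rightarrow> zinf \<Rightarrow> int \<Rightarrow> ('r, 'a) rmod) \<Rightarrow> (zinf \<Rightarrow> zinf \<Rightarrow> zinf \<Rightarrow> int \<Rightarrow> 'a \<Rightarrow> 'a)
   \<Rightarrow> int \<Rightarrow> int \<Rightarrow> (nat \<Rightarrow> 'a) \<Rightarrow> int \<Rightarrow> 'a" where
  "phix H del n s a = (\<lambda>i. if i \<le> s then del (Fin i) (Fin s) PInf n (psum (H (Fin s) PInf n) a (nat (s - i))) else undefined)"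

definition Phi :: "(zinf \<Rightarrow> zinf \<Rightarrow> int \<Rightarrow> ('r::ring_1, 'a) rmod) \<Rightarrow> (zinf \<Rightarrow> zinf \<Rightarrow> zinf \<Rightarrow> zinf \<Rightarrow> int \<Rightarrow> 'a \<Rightarrow> 'a)
   \<Rightarrow> (zinf \<Rightarrow> zinf \<Rightarrow> zinf \<Rightarrow> int \<Rightarrow> 'a \<Rightarrow> 'a) \<Rightarrow> int \<Rightarrow> (int \<times> (nat \<Rightarrow> 'a) set) set \<Rightarrow> (int \<times> (int \<Rightarrow> 'a)) set" where
  "Phi H eta del n c = (case rep c of (s, d) \<Rightarrow>
      colim_cls (LimH H eta (n - 1)) (LimH_tr eta (n - 1)) UNIV (s, phix H del n s (rep d)))"

context rce begin

definition PIK :: "int \<Rightarrow> int \<Rightarrow> (nat \<Rightarrow> 'a) set" where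
  "PIK n s = {a. \<forall>r. a r \<in> Kin n r s}"

lemma modA: "is_rmod (H (Fin s) PInf n)" by (rule modH) simp
lemma hom_eta_AA: "s \<le> u \<Longrightarrow> is_hom (H (Fin s) PInf n) (H (Fin u) PInf n) (eta (Fin s) PInf (Fin u) PInf n)"
  by (rule hom_eta) auto

lemma PIK_eq: "tower.PI (KT n s) = PIK n s" by (simp add: tower.PI_def[OF towerK] PIK_def KT_def)

lemma Kin_eta: assumes x: "x \<in> Kin n r s" and "s \<le> u" shows "eta (Fin s) PInf (Fin u) PInf n x \<in> Kin n r u"
  using assms(2)
proof (induction rule: push_induct)
  case base then show ?case using x eta_id Kin_carr by simp
next
  case (step v)
  have c: "x \<in> carr (H (Fin s) PInf n)" using x Kin_carr by simp
  have "eta (Fin v) PInf (Fin (v + 1)) PInf n (eta (Fin s) PInf (Fin v) PInf n x) \<in> Kin n r (v + 1)"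
    using Kin_al[of "eta (Fin s) PInf (Fin v) PInf n x" n r "v+1"] step by simp
  then show ?case using eta_comp[OF c, of "Fin v" PInf "Fin (v+1)" PInf] step by simp
qed

lemma Kin_mono: "x \<in> Kin n r s \<Longrightarrow> r' \<le> r \<Longrightarrow> x \<in> Kin n r' s"
proof (induction r)
  case 0 then show ?case by simp
next
  case (Suc r) then show ?case using Kin_Suc[of x n r s] by (cases "r' = Suc r") auto
qed

lemma PIK_carr: "a \<in> PIK n s \<Longrightarrow> a r \<in> carr (H (Fin s) PInf n)" by (simp add: PIK_def Kin_def)

lemma psum_Kin: "a \<in> PIK n s \<Longrightarrow> psum (H (Fin s) PInf n) a k \<in> Kin n 0 s"
proof (induction k)
  case (Suc k)
  have "a k \<in> Kin n 0 s" using Suc(2) Kin_mono[of "a k" n k s 0] by (simp add: PIK_def)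
  then show ?case using Suc Kin_add by simp
qed (simp add: Kin_zero)

lemma killed2: assumes x: "x \<in> Kin n r s" and "s \<le> u" "s - int r \<le> i" "i \<le> u"
  shows "del (Fin i) (Fin u) PInf n (eta (Fin s) PInf (Fin u) PInf n x) = mzero (H (Fin i) (Fin u) (n - 1))"
proof -
  have c: "x \<in> carr (H (Fin s) PInf n)" using x Kin_carr by simp
  have d0: "del (Fin (s - int r)) (Fin s) PInf n x = mzero (H (Fin (s - int r)) (Fin s) (n - 1))" using x by (simp add: Kin_def)
  have "del (Fin (min i s)) (Fin s) PInf n x = eta (Fin (s - int r)) (Fin s) (Fin (min i s)) (Fin s) (n - 1) (del (Fin (s - int r)) (Fin s) PInf n x)"
    using del_nat[OF c, of "Fin (s - int r)" "Fin (min i s)" "Fin s" PInf] eta_id[OF c] assms by simp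
  also have "\<dots> = mzero (H (Fin (min i s)) (Fin s) (n - 1))" using d0 eta0 assms by simp
  finally have d1: "del (Fin (min i s)) (Fin s) PInf n x = mzero (H (Fin (min i s)) (Fin s) (n - 1))" .
  have "del (Fin i) (Fin u) PInf n (eta (Fin s) PInf (Fin u) PInf n x) = eta (Fin (min i s)) (Fin s) (Fin i) (Fin u) (n - 1) (del (Fin (min i s)) (Fin s) PInf n x)"
    using del_nat[OF c, of "Fin (min i s)" "Fin i" "Fin u" PInf] assms by simp
  then show ?thesis using d1 eta0 assms by simp
qed

lemma killed: assumes x: "x \<in> Kin n r s" and "s - int r \<le> i" "i \<le> s"
  shows "del (Fin i) (Fin s) PInf n x = mzero (H (Fin i) (Fin s) (n - 1))"
  using killed2[OF x order_refl assms(2,3)] eta_id Kin_carr[OF x] by simp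

lemma phix_carr: assumes a: "a \<in> PIK n s" shows "phix H del n s a \<in> carr (LimH H eta (n - 1) s)"
proof -
  have ac: "\<And>r. a r \<in> carr (H (Fin s) PInf n)" using a PIK_carr by blast
  have P: "\<And>k. psum (H (Fin s) PInf n) a k \<in> carr (H (Fin s) PInf n)" using psum_carr[OF modA ac] by simp
  have comp: "eta (Fin (i - 1)) (Fin s) (Fin i) (Fin s) (n - 1) (phix H del n s a (i - 1)) = phix H del n s a i" if i: "i \<le> s" for i
  proof -
    have e: "nat (s - (i - 1)) = Suc (nat (s - i))" using i by simp
    have "eta (Fin (i - 1)) (Fin s) (Fin i) (Fin s) (n - 1) (phix H del n s a (i - 1))
        = del (Fin i) (Fin s) PInf n (psum (H (Fin s) PInf n) a (Suc (nat (s - i))))"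
      using i del_nat[OF P[of "Suc (nat (s - i))"], of "Fin (i - 1)" "Fin i" "Fin s" PInf] eta_id[OF P[of "Suc (nat (s - i))"]]
      by (simp add: phix_def e del: psum.simps)
    also have "\<dots> = del (Fin i) (Fin s) PInf n (psum (H (Fin s) PInf n) a (nat (s - i)))"
      by (rule psum_stable[OF modA modH]) (use i a ac in \<open>auto simp: del_add del_carr PIK_def intro!: killed\<close>)
    finally show ?thesis using i by (simp add: phix_def)
  qed
  show ?thesis unfolding LimH_mem using comp P by (auto simp: phix_def del_carr)
qed

lemma phix_push: assumes a: "a \<in> PIK n s" and su: "s \<le> u"
  shows "PL (n - 1) s u (phix H del n s a) = phix H del n u (\<lambda>r. eta (Fin s) PInf (Fin u) PInf n (a r))"
proof (rule ext)
  fix i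
  have ac: "\<And>r. a r \<in> carr (H (Fin s) PInf n)" using a PIK_carr by blast
  have P: "\<And>k. psum (H (Fin s) PInf n) a k \<in> carr (H (Fin s) PInf n)" using psum_carr[OF modA ac] by simp
  show "PL (n - 1) s u (phix H del n s a) i = phix H del n u (\<lambda>r. eta (Fin s) PInf (Fin u) PInf n (a r)) i"
  proof (cases "i \<le> u")
    case False then show ?thesis by (simp add: PL_def phix_def)
  next
    case True
    define k0 where "k0 = nat (s - min i s)"
    define F where "F = (\<lambda>x. del (Fin i) (Fin u) PInf n (eta (Fin s) PInf (Fin u) PInf n x))"
    have "PL (n - 1) s u (phix H del n s a) i = F (psum (H (Fin s) PInf n) a k0)"
      using True su del_nat[OF P, of "Fin (min i s)" "Fin i" "Fin u" PInf] by (simp add: PL_def phix_def F_def k0_def)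
    also have "\<dots> = F (psum (H (Fin s) PInf n) a (nat (u - i)))"
      by (rule psum_stable[OF modA modH, symmetric])
        (use True su a ac in \<open>auto simp: F_def del_add eta_add del_carr eta_carr PIK_def k0_def intro!: killed2\<close>)
    also have "\<dots> = phix H del n u (\<lambda>r. eta (Fin s) PInf (Fin u) PInf n (a r)) i"
      using True su psum_hom[OF modA modA hom_eta_AA[OF su] ac] by (simp add: F_def phix_def)
    finally show ?thesis .
  qed
qed

end

context rce begin

abbreviation "lcK n s \<equiv> lim1_cls (KT n s) (\<lambda>r x. x)"

definition Wcls :: "int \<Rightarrow> int \<Rightarrow> (nat \<Rightarrow> 'a) \<Rightarrow> (int \<times> (nat \<Rightarrow> 'a) set) set" where
  "Wcls n s a = colim_cls (RlimK (Acpl H n) (alcpl eta n)) (RlimK_tr (Acpl H n) (alcpl eta n)) UNIV (s, lcK n s a)"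

lemma KT_ops[simp]: "madd (KT n s r) = madd (H (Fin s) PInf n)" "mneg (KT n s r) = mneg (H (Fin s) PInf n)"
  "msmul (KT n s r) = msmul (H (Fin s) PInf n)" "mzero (KT n s r) = mzero (H (Fin s) PInf n)" "carr (KT n s r) = Kin n r s"
  by (simp_all add: KT_def)

lemma RlimK_eq: "RlimK (Acpl H n) (alcpl eta n) s = lim1 (KT n s) (\<lambda>r x. x)"
  by (simp add: RlimK_def Ktower_eq)

lemma hom_al_KT: "is_hom (KT n (k - 1) r) (KT n k r) (alcpl eta n k)"
  unfolding is_hom_def KT_ops alcpl_def
proof (intro conjI ballI allI)
  fix x assume x: "x \<in> Kin n r (k - 1)"
  then show "eta (Fin (k - 1)) PInf (Fin k) PInf n x \<in> Kin n r k" by (rule Kin_al)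
  fix y assume y: "y \<in> Kin n r (k - 1)"
  show "eta (Fin (k - 1)) PInf (Fin k) PInf n (madd (H (Fin (k - 1)) PInf n) x y) =
    madd (H (Fin k) PInf n) (eta (Fin (k - 1)) PInf (Fin k) PInf n x) (eta (Fin (k - 1)) PInf (Fin k) PInf n y)"
    by (rule eta_add) (use x y Kin_carr in auto)
next
  fix c x assume x: "x \<in> Kin n r (k - 1)"
  show "eta (Fin (k - 1)) PInf (Fin k) PInf n (msmul (H (Fin (k - 1)) PInf n) c x) =
    msmul (H (Fin k) PInf n) c (eta (Fin (k - 1)) PInf (Fin k) PInf n x)"
    by (rule eta_smul) (use x Kin_carr in auto)
qed

lemma lcK_carr: "a \<in> PIK n s \<Longrightarrow> lcK n s a \<in> carr (lim1 (KT n s) (\<lambda>r x. x))"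
proof -
  assume "a \<in> PIK n s"
  then have "a \<in> tower.PI (KT n s)" using PIK_eq by simp
  then show ?thesis unfolding tower.carr_lim1[OF towerK[of n s]] by (intro bexI[of _ a] refl)
qed

lemma carr_lcK: "c \<in> carr (lim1 (KT n s) (\<lambda>r x. x)) \<Longrightarrow> \<exists>a\<in>PIK n s. c = lcK n s a"
proof -
  assume "c \<in> carr (lim1 (KT n s) (\<lambda>r x. x))"
  then obtain y where "y \<in> tower.PI (KT n s)" "c = lcK n s y" unfolding tower.carr_lim1[OF towerK[of n s]] by (elim bexE)
  then show ?thesis using PIK_eq by auto
qed

lemma RlimK_tr_lc: assumes a: "a \<in> PIK n (k - 1)"
  shows "RlimK_tr (Acpl H n) (alcpl eta n) k (lcK n (k - 1) a) = lcK n k (\<lambda>r. eta (Fin (k - 1)) PInf (Fin k) PInf n (a r))"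
proof -
  have "lim1_cls (KT n k) (\<lambda>r x. x) (\<lambda>r. alcpl eta n k (rep (lcK n (k - 1) a) r)) = lim1_cls (KT n k) (\<lambda>r x. x) (\<lambda>r. alcpl eta n k (a r))"
    by (rule lim1_map[OF towerK towerK hom_al_KT]) (use a PIK_eq in auto)
  then show ?thesis unfolding RlimK_tr_def Ktower_eq by (simp add: alcpl_def)
qed

lemma RlimK_tr_lc': assumes a: "a \<in> PIK n k"
  shows "RlimK_tr (Acpl H n) (alcpl eta n) (k + 1) (lcK n k a) = lcK n (k + 1) (\<lambda>r. eta (Fin k) PInf (Fin (k + 1)) PInf n (a r))"
  using RlimK_tr_lc[of a n "k + 1"] a by simp

lemma etaPIK: "a \<in> PIK n s \<Longrightarrow> s \<le> u \<Longrightarrow> (\<lambda>r. eta (Fin s) PInf (Fin u) PInf n (a r)) \<in> PIK n u"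
  by (simp add: PIK_def Kin_eta)

lemma dsysW: "dsys (RlimK (Acpl H n) (alcpl eta n)) (RlimK_tr (Acpl H n) (alcpl eta n)) UNIV"
proof
  fix k :: int and c assume "c \<in> carr (RlimK (Acpl H n) (alcpl eta n) (k - 1))"
  then obtain a where a: "a \<in> PIK n (k - 1)" "c = lcK n (k - 1) a" using carr_lcK RlimK_eq by metis
  show "RlimK_tr (Acpl H n) (alcpl eta n) k c \<in> carr (RlimK (Acpl H n) (alcpl eta n) k)"
    using a RlimK_tr_lc[OF a(1)] lcK_carr[OF etaPIK[OF a(1), of k]] RlimK_eq by simp
qed auto

lemma push_W: assumes a: "a \<in> PIK n s" and su: "s \<le> u"
  shows "push (RlimK_tr (Acpl H n) (alcpl eta n)) s u (lcK n s a) = lcK n u (\<lambda>r. eta (Fin s) PInf (Fin u) PInf n (a r))"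
  using su
proof (induction rule: push_induct)
  case base then show ?case using a eta_id PIK_carr by simp
next
  case (step v)
  have "push (RlimK_tr (Acpl H n) (alcpl eta n)) s (v + 1) (lcK n s a)
     = lcK n (v + 1) (\<lambda>r. eta (Fin v) PInf (Fin (v + 1)) PInf n (eta (Fin s) PInf (Fin v) PInf n (a r)))"
    using step RlimK_tr_lc'[OF etaPIK[OF a step(1)]] by (simp add: push_step)
  also have "\<dots> = lcK n (v + 1) (\<lambda>r. eta (Fin s) PInf (Fin (v + 1)) PInf n (a r))"
    using eta_comp[OF PIK_carr[OF a]] step by simp
  finally show ?case .
qed

lemma W_eq: assumes a: "a \<in> PIK n s" and b: "b \<in> PIK n s'"
  shows "Wcls n s a = Wcls n s' b \<longleftrightarrow> (\<exists>u. s \<le> u \<and> s' \<le> u \<and>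
      lcK n u (\<lambda>r. eta (Fin s) PInf (Fin u) PInf n (a r)) = lcK n u (\<lambda>r. eta (Fin s') PInf (Fin u) PInf n (b r)))"
proof -
  interpret D: dsys "RlimK (Acpl H n) (alcpl eta n)" "RlimK_tr (Acpl H n) (alcpl eta n)" UNIV by (rule dsysW)
  show ?thesis unfolding Wcls_def using D.cls_eq[of s s' "lcK n s a" "lcK n s' b"] lcK_carr a b RlimK_eq push_W
    by auto
qed

lemma W_carr: "c \<in> carr (Wpp H eta n) \<longleftrightarrow> (\<exists>s a. a \<in> PIK n s \<and> c = Wcls n s a)"
proof -
  interpret D: dsys "RlimK (Acpl H n) (alcpl eta n)" "RlimK_tr (Acpl H n) (alcpl eta n)" UNIV by (rule dsysW)
  show ?thesis unfolding Wpp_def Wgrp_def D.carr_colim Wcls_def RlimK_eq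
    using carr_lcK lcK_carr by blast
qed

lemma W_rep: assumes a: "a \<in> PIK n s" and r: "rep (Wcls n s a) = (s0, d0)"
  shows "rep d0 \<in> PIK n s0" "Wcls n s0 (rep d0) = Wcls n s a"
proof -
  interpret D: dsys "RlimK (Acpl H n) (alcpl eta n)" "RlimK_tr (Acpl H n) (alcpl eta n)" UNIV by (rule dsysW)
  have R: "d0 \<in> carr (RlimK (Acpl H n) (alcpl eta n) s0)" "D.cls (s0, d0) = D.cls (s, lcK n s a)"
    using D.rep_cls[OF UNIV_I _ r[unfolded Wcls_def]] lcK_carr[OF a] RlimK_eq by auto
  obtain b where b: "b \<in> PIK n s0" "d0 = lcK n s0 b" using R(1) carr_lcK RlimK_eq by metis
  interpret T: tower "KT n s0" "\<lambda>r x. x" by (rule towerK)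
  show "rep d0 \<in> PIK n s0" using T.rep_lc(2)[of b] b PIK_eq by simp
  show "Wcls n s0 (rep d0) = Wcls n s a" using T.rep_lc(3)[of b] b PIK_eq R(2) by (simp add: Wcls_def)
qed

lemma lcK_add: "a \<in> PIK n s \<Longrightarrow> b \<in> PIK n s \<Longrightarrow>
   madd (lim1 (KT n s) (\<lambda>r x. x)) (lcK n s a) (lcK n s b) = lcK n s (\<lambda>r. madd (H (Fin s) PInf n) (a r) (b r))"
  using tower.lc_add[OF towerK] PIK_eq by simp

lemma lcK_smul: "a \<in> PIK n s \<Longrightarrow>
   msmul (lim1 (KT n s) (\<lambda>r x. x)) c (lcK n s a) = lcK n s (\<lambda>r. msmul (H (Fin s) PInf n) c (a r))"
  using tower.lc_smul[OF towerK] PIK_eq by simp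

lemma PIK_add: "a \<in> PIK n s \<Longrightarrow> b \<in> PIK n s \<Longrightarrow> (\<lambda>r. madd (H (Fin s) PInf n) (a r) (b r)) \<in> PIK n s"
  by (simp add: PIK_def Kin_add)
lemma PIK_smul: "a \<in> PIK n s \<Longrightarrow> (\<lambda>r. msmul (H (Fin s) PInf n) c (a r)) \<in> PIK n s"
  by (simp add: PIK_def Kin_smul)
lemma PIK_neg: "a \<in> PIK n s \<Longrightarrow> (\<lambda>r. mneg (H (Fin s) PInf n) (a r)) \<in> PIK n s"
  by (simp add: PIK_def Kin_neg)

lemma W_add: assumes a: "a \<in> PIK n s" and b: "b \<in> PIK n s'" and "s \<le> u" "s' \<le> u"
  shows "madd (Wpp H eta n) (Wcls n s a) (Wcls n s' b) =
     Wcls n u (\<lambda>r. madd (H (Fin u) PInf n) (eta (Fin s) PInf (Fin u) PInf n (a r)) (eta (Fin s') PInf (Fin u) PInf n (b r)))"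
proof -
  interpret D: dsys "RlimK (Acpl H n) (alcpl eta n)" "RlimK_tr (Acpl H n) (alcpl eta n)" UNIV by (rule dsysW)
  have tadd: "RlimK_tr (Acpl H n) (alcpl eta n) k (madd (RlimK (Acpl H n) (alcpl eta n) (k - 1)) c d) =
      madd (RlimK (Acpl H n) (alcpl eta n) k) (RlimK_tr (Acpl H n) (alcpl eta n) k c) (RlimK_tr (Acpl H n) (alcpl eta n) k d)"
    if cd: "c \<in> carr (RlimK (Acpl H n) (alcpl eta n) (k - 1))" "d \<in> carr (RlimK (Acpl H n) (alcpl eta n) (k - 1))" for k c d
  proof -
    obtain x where x: "x \<in> PIK n (k - 1)" "c = lcK n (k - 1) x" using carr_lcK cd(1)[unfolded RlimK_eq] by blast
    obtain y where y: "y \<in> PIK n (k - 1)" "d = lcK n (k - 1) y" using carr_lcK cd(2)[unfolded RlimK_eq] by blast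
    note xy = x y
    have e: "(\<lambda>r. eta (Fin (k - 1)) PInf (Fin k) PInf n (madd (H (Fin (k - 1)) PInf n) (x r) (y r))) =
        (\<lambda>r. madd (H (Fin k) PInf n) (eta (Fin (k - 1)) PInf (Fin k) PInf n (x r)) (eta (Fin (k - 1)) PInf (Fin k) PInf n (y r)))"
      using xy PIK_carr by (simp add: eta_add)
    show ?thesis using xy RlimK_eq lcK_add RlimK_tr_lc PIK_add e etaPIK[of _ n "k - 1" k] by simp
  qed
  have addc: "madd (RlimK (Acpl H n) (alcpl eta n) j) c d \<in> carr (RlimK (Acpl H n) (alcpl eta n) j)"
    if cd: "c \<in> carr (RlimK (Acpl H n) (alcpl eta n) j)" "d \<in> carr (RlimK (Acpl H n) (alcpl eta n) j)" for j c d
  proof -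
    obtain x where x: "x \<in> PIK n j" "c = lcK n j x" using carr_lcK cd(1)[unfolded RlimK_eq] by blast
    obtain y where y: "y \<in> PIK n j" "d = lcK n j y" using carr_lcK cd(2)[unfolded RlimK_eq] by blast
    note xy = x y
    show ?thesis using lcK_add[OF xy(1) xy(3)] lcK_carr[OF PIK_add[OF xy(1) xy(3)]] xy RlimK_eq by simp
  qed
  have "madd (Wpp H eta n) (Wcls n s a) (Wcls n s' b) =
      D.cls (u, madd (RlimK (Acpl H n) (alcpl eta n) u) (lcK n u (\<lambda>r. eta (Fin s) PInf (Fin u) PInf n (a r))) (lcK n u (\<lambda>r. eta (Fin s') PInf (Fin u) PInf n (b r))))"
    unfolding Wpp_def Wgrp_def Wcls_def
    using D.cls_add[OF tadd addc, of s s' "lcK n s a" "lcK n s' b" u] assms lcK_carr RlimK_eq push_W by auto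
  then show ?thesis using lcK_add etaPIK assms RlimK_eq by (simp add: Wcls_def)
qed

lemma W_smul: assumes a: "a \<in> PIK n s"
  shows "msmul (Wpp H eta n) c (Wcls n s a) = Wcls n s (\<lambda>r. msmul (H (Fin s) PInf n) c (a r))"
proof -
  interpret D: dsys "RlimK (Acpl H n) (alcpl eta n)" "RlimK_tr (Acpl H n) (alcpl eta n)" UNIV by (rule dsysW)
  have tsm: "RlimK_tr (Acpl H n) (alcpl eta n) k (msmul (RlimK (Acpl H n) (alcpl eta n) (k - 1)) c x) =
      msmul (RlimK (Acpl H n) (alcpl eta n) k) c (RlimK_tr (Acpl H n) (alcpl eta n) k x)"
    if cd: "x \<in> carr (RlimK (Acpl H n) (alcpl eta n) (k - 1))" for k x
  proof -
    obtain y where xy: "y \<in> PIK n (k - 1)" "x = lcK n (k - 1) y" using carr_lcK cd(1)[unfolded RlimK_eq] by blast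
    have e: "(\<lambda>r. eta (Fin (k - 1)) PInf (Fin k) PInf n (msmul (H (Fin (k - 1)) PInf n) c (y r))) =
        (\<lambda>r. msmul (H (Fin k) PInf n) c (eta (Fin (k - 1)) PInf (Fin k) PInf n (y r)))"
      using xy PIK_carr by (simp add: eta_smul)
    show ?thesis using xy RlimK_eq lcK_smul RlimK_tr_lc PIK_smul e etaPIK[of _ n "k - 1" k] by simp
  qed
  have smc: "msmul (RlimK (Acpl H n) (alcpl eta n) j) c x \<in> carr (RlimK (Acpl H n) (alcpl eta n) j)"
    if cd: "x \<in> carr (RlimK (Acpl H n) (alcpl eta n) j)" for j x
  proof -
    obtain y where xy: "y \<in> PIK n j" "x = lcK n j y" using carr_lcK cd(1)[unfolded RlimK_eq] by blast
    show ?thesis using lcK_smul[OF xy(1)] lcK_carr[OF PIK_smul[OF xy(1)]] xy RlimK_eq by simp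
  qed
  show ?thesis unfolding Wpp_def Wgrp_def Wcls_def
    using D.cls_smul[OF tsm smc, of s "lcK n s a"] a lcK_carr RlimK_eq lcK_smul by auto
qed

end

context rce begin

lemma phix_eta_cong: assumes a: "a \<in> PIK n s" and "s \<le> t" "t \<le> u"
  shows "(\<lambda>r. eta (Fin s) PInf (Fin u) PInf n (a r)) = (\<lambda>r. eta (Fin t) PInf (Fin u) PInf n (eta (Fin s) PInf (Fin t) PInf n (a r)))"
  using eta_comp[OF PIK_carr[OF a]] assms by auto

lemma WD: assumes a: "a \<in> PIK n s" and b: "b \<in> PIK n s'" and e: "Wcls n s a = Wcls n s' b"
  shows "clsCL (n - 1) (s, phix H del n s a) = clsCL (n - 1) (s', phix H del n s' b)"
proof -
  obtain t where t: "s \<le> t" "s' \<le> t"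
    "lcK n t (\<lambda>r. eta (Fin s) PInf (Fin t) PInf n (a r)) = lcK n t (\<lambda>r. eta (Fin s') PInf (Fin t) PInf n (b r))"
    using W_eq[OF a b] e by auto
  define a' where "a' = (\<lambda>r. eta (Fin s) PInf (Fin t) PInf n (a r))"
  define b' where "b' = (\<lambda>r. eta (Fin s') PInf (Fin t) PInf n (b r))"
  have a': "a' \<in> PIK n t" and b': "b' \<in> PIK n t" using etaPIK a b t by (auto simp: a'_def b'_def)
  interpret T: tower "KT n t" "\<lambda>r x. x" by (rule towerK)
  have "b' \<in> lcK n t a'" using T.lc_eq[of a' b'] a' b' t PIK_eq by (simp add: a'_def b'_def)
  then obtain w where w: "w \<in> PIK n t" "\<And>r. b' r = madd (H (Fin t) PInf n) (a' r) (madd (H (Fin t) PInf n) (w r) (mneg (H (Fin t) PInf n) (w (Suc r))))"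
    unfolding T.lc_mem PIK_eq by (auto simp: lim1_delta_def)
  have wc: "\<And>r. w r \<in> carr (H (Fin t) PInf n)" using w PIK_carr by blast
  have ac: "\<And>r. a' r \<in> carr (H (Fin t) PInf n)" using a' PIK_carr by blast
  have bc: "\<And>r. b' r \<in> carr (H (Fin t) PInf n)" using b' PIK_carr by blast
  have dc: "\<And>r. madd (H (Fin t) PInf n) (w r) (mneg (H (Fin t) PInf n) (w (Suc r))) \<in> carr (H (Fin t) PInf n)"
    using wc by (simp add: m_add[OF modA] m_neg[OF modA])
  obtain v where v: "t \<le> v" "eta (Fin t) PInf (Fin v) PInf n (w 0) = mzero (H (Fin v) PInf n)"
    using w(1) by (auto simp: PIK_def Kin_def)
  have key: "phix H del n v (\<lambda>r. eta (Fin t) PInf (Fin v) PInf n (a' r)) = phix H del n v (\<lambda>r. eta (Fin t) PInf (Fin v) PInf n (b' r))"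
  proof (rule ext)
    fix i
    show "phix H del n v (\<lambda>r. eta (Fin t) PInf (Fin v) PInf n (a' r)) i = phix H del n v (\<lambda>r. eta (Fin t) PInf (Fin v) PInf n (b' r)) i"
    proof (cases "i \<le> v")
      case False then show ?thesis by (simp add: phix_def)
    next
      case True
      define k where "k = nat (v - i)"
      define G where "G = (\<lambda>x. del (Fin i) (Fin v) PInf n (eta (Fin t) PInf (Fin v) PInf n x))"
      have Gadd: "G (madd (H (Fin t) PInf n) x y) = madd (H (Fin i) (Fin v) (n - 1)) (G x) (G y)"
        if "x \<in> carr (H (Fin t) PInf n)" "y \<in> carr (H (Fin t) PInf n)" for x y
        using that True v by (simp add: G_def eta_add del_add eta_carr)
      have Gc: "G x \<in> carr (H (Fin i) (Fin v) (n - 1))" if "x \<in> carr (H (Fin t) PInf n)" for x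
        using that True v by (simp add: G_def eta_carr del_carr)
      have Gneg: "G (mneg (H (Fin t) PInf n) x) = mneg (H (Fin i) (Fin v) (n - 1)) (G x)" if "x \<in> carr (H (Fin t) PInf n)" for x
        using that True v by (simp add: G_def eta_neg del_neg eta_carr)
      have G0: "G (w 0) = mzero (H (Fin i) (Fin v) (n - 1))" using v True by (simp add: G_def del0)
      have Gk: "G (w k) = mzero (H (Fin i) (Fin v) (n - 1))"
        unfolding G_def by (rule killed2) (use w(1) v True in \<open>auto simp: PIK_def k_def\<close>)
      have ph: "phix H del n v (\<lambda>r. eta (Fin t) PInf (Fin v) PInf n (c r)) i = G (psum (H (Fin t) PInf n) c k)"
        if "\<And>r. c r \<in> carr (H (Fin t) PInf n)" for c
        using True psum_hom[OF modA modA hom_eta_AA[OF v(1)], where a=c and k=k] that by (simp add: phix_def G_def k_def)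
      have "psum (H (Fin t) PInf n) b' k = madd (H (Fin t) PInf n) (psum (H (Fin t) PInf n) a' k)
          (madd (H (Fin t) PInf n) (w 0) (mneg (H (Fin t) PInf n) (w k)))"
      proof -
        have b'e: "b' = (\<lambda>r. madd (H (Fin t) PInf n) (a' r) (madd (H (Fin t) PInf n) (w r) (mneg (H (Fin t) PInf n) (w (Suc r)))))"
          using w(2) by (rule ext)
        have "psum (H (Fin t) PInf n) (\<lambda>r. madd (H (Fin t) PInf n) (a' r) (madd (H (Fin t) PInf n) (w r) (mneg (H (Fin t) PInf n) (w (Suc r))))) k
           = madd (H (Fin t) PInf n) (psum (H (Fin t) PInf n) a' k) (psum (H (Fin t) PInf n) (\<lambda>r. madd (H (Fin t) PInf n) (w r) (mneg (H (Fin t) PInf n) (w (Suc r)))) k)"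
          by (rule psum_add[OF modA]) (use ac dc in auto)
        moreover have "psum (H (Fin t) PInf n) (\<lambda>r. madd (H (Fin t) PInf n) (w r) (mneg (H (Fin t) PInf n) (w (Suc r)))) k
           = madd (H (Fin t) PInf n) (w 0) (mneg (H (Fin t) PInf n) (w k))"
          by (rule psum_tel[OF modA]) (use wc in auto)
        ultimately show ?thesis using b'e by simp
      qed
      then have "G (psum (H (Fin t) PInf n) b' k) = madd (H (Fin i) (Fin v) (n - 1)) (G (psum (H (Fin t) PInf n) a' k))
          (madd (H (Fin i) (Fin v) (n - 1)) (G (w 0)) (mneg (H (Fin i) (Fin v) (n - 1)) (G (w k))))"
        using Gadd Gneg psum_carr[OF modA ac] wc m_neg[OF modA] m_add[OF modA] by simp
      also have "\<dots> = G (psum (H (Fin t) PInf n) a' k)"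
        using G0 Gk Gc psum_carr[OF modA ac] True
        by (simp add: m_neg_zero[OF modH] m_rzero[OF modH] m_lzero[OF modH] m_zero[OF modH])
      finally show ?thesis using ph[OF ac] ph[OF bc] by simp
    qed
  qed
  have pa: "PL (n - 1) s v (phix H del n s a) = phix H del n v (\<lambda>r. eta (Fin t) PInf (Fin v) PInf n (a' r))"
    using phix_push[OF a, of v] t v phix_eta_cong[OF a t(1) v(1)] by (simp add: a'_def)
  have pb: "PL (n - 1) s' v (phix H del n s' b) = phix H del n v (\<lambda>r. eta (Fin t) PInf (Fin v) PInf n (b' r))"
    using phix_push[OF b, of v] t v phix_eta_cong[OF b t(2) v(1)] by (simp add: b'_def)
  show ?thesis using CL_eq[OF phix_carr[OF a] phix_carr[OF b]] pa pb key t v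
    by (auto intro!: exI[of _ v])
qed

lemma Phi_cls: assumes a: "a \<in> PIK n s"
  shows "Phi H eta del n (Wcls n s a) = clsCL (n - 1) (s, phix H del n s a)"
proof -
  obtain s0 d0 where r: "rep (Wcls n s a) = (s0, d0)" by (metis prod.exhaust)
  note R = W_rep[OF a r]
  show ?thesis unfolding Phi_def r using WD[OF R(1) a R(2)] by simp
qed

lemma phix_add: assumes a: "a \<in> PIK n u" and b: "b \<in> PIK n u"
  shows "phix H del n u (\<lambda>r. madd (H (Fin u) PInf n) (a r) (b r)) = madd (LimH H eta (n - 1) u) (phix H del n u a) (phix H del n u b)"
proof (rule ext)
  fix i
  have ac: "\<And>r. a r \<in> carr (H (Fin u) PInf n)" "\<And>r. b r \<in> carr (H (Fin u) PInf n)" using a b PIK_carr by blast+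
  show "phix H del n u (\<lambda>r. madd (H (Fin u) PInf n) (a r) (b r)) i = madd (LimH H eta (n - 1) u) (phix H del n u a) (phix H del n u b) i"
    using psum_add[OF modA ac] psum_carr[OF modA ac(1)] psum_carr[OF modA ac(2)]
    by (simp add: phix_def LimH_def ilim_def del_add)
qed

lemma phix_smul: assumes a: "a \<in> PIK n u"
  shows "phix H del n u (\<lambda>r. msmul (H (Fin u) PInf n) c (a r)) = msmul (LimH H eta (n - 1) u) c (phix H del n u a)"
proof (rule ext)
  fix i
  have ac: "\<And>r. a r \<in> carr (H (Fin u) PInf n)" using a PIK_carr by blast
  show "phix H del n u (\<lambda>r. msmul (H (Fin u) PInf n) c (a r)) i = msmul (LimH H eta (n - 1) u) c (phix H del n u a) i"
    using psum_smul[OF modA ac] psum_carr[OF modA ac]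
    by (simp add: phix_def LimH_def ilim_def del_smul)
qed

end

context rce begin

lemma Phi_in: assumes a: "a \<in> PIK n s" shows "Phi H eta del n (Wcls n s a) \<in> carr (ker_kappa H eta (n - 1))"
proof -
  have "\<exists>u\<ge>s. eta (Fin i) (Fin s) (Fin i) (Fin u) (n - 1) (phix H del n s a i) = mzero (H (Fin i) (Fin u) (n - 1))"
    if i: "i \<le> s" for i
  proof -
    define P where "P = psum (H (Fin s) PInf n) a (nat (s - i))"
    have P: "P \<in> Kin n 0 s" using psum_Kin[OF a] by (simp add: P_def)
    then obtain u where u: "s \<le> u" "eta (Fin s) PInf (Fin u) PInf n P = mzero (H (Fin u) PInf n)" by (auto simp: Kin_def)
    have "eta (Fin i) (Fin s) (Fin i) (Fin u) (n - 1) (phix H del n s a i) = del (Fin i) (Fin u) PInf n (eta (Fin s) PInf (Fin u) PInf n P)"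
      using i u del_nat[OF Kin_carr[OF P], of "Fin i" "Fin i" "Fin u" PInf] by (simp add: phix_def P_def)
    then show ?thesis using u i del0 by auto
  qed
  then show ?thesis using Phi_cls[OF a] ker_iff[OF phix_carr[OF a]] by simp
qed

lemma Phi_inj: assumes a: "a \<in> PIK n s" and b: "b \<in> PIK n s'"
  and e: "Phi H eta del n (Wcls n s a) = Phi H eta del n (Wcls n s' b)"
  shows "Wcls n s a = Wcls n s' b"
proof -
  obtain u where u: "s \<le> u" "s' \<le> u" "PL (n - 1) s u (phix H del n s a) = PL (n - 1) s' u (phix H del n s' b)"
    using e Phi_cls[OF a] Phi_cls[OF b] CL_eq[OF phix_carr[OF a] phix_carr[OF b]] by auto
  define a' where "a' = (\<lambda>r. eta (Fin s) PInf (Fin u) PInf n (a r))"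
  define b' where "b' = (\<lambda>r. eta (Fin s') PInf (Fin u) PInf n (b r))"
  have a': "a' \<in> PIK n u" and b': "b' \<in> PIK n u" using etaPIK a b u by (auto simp: a'_def b'_def)
  have ph: "phix H del n u a' = phix H del n u b'" using u phix_push[OF a u(1)] phix_push[OF b u(2)] by (simp add: a'_def b'_def)
  let ?A = "H (Fin u) PInf n"
  have ac: "\<And>r. a' r \<in> carr ?A" "\<And>r. b' r \<in> carr ?A" using a' b' PIK_carr by blast+
  define e where "e = (\<lambda>r. madd ?A (b' r) (mneg ?A (a' r)))"
  have eP: "e \<in> PIK n u" using PIK_add[OF b' PIK_neg[OF a']] by (simp add: e_def)
  have ec: "\<And>r. e r \<in> carr ?A" using eP PIK_carr by blast
  define P where "P = (\<lambda>q. psum ?A e q)"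
  have Pc: "\<And>q. P q \<in> carr ?A" using psum_carr[OF modA ec] by (simp add: P_def)
  have Peq: "P q = madd ?A (psum ?A b' q) (mneg ?A (psum ?A a' q))" for q
  proof -
    have "P q = madd ?A (psum ?A b' q) (psum ?A (\<lambda>r. mneg ?A (a' r)) q)"
      unfolding P_def e_def by (rule psum_add[OF modA]) (use ac in \<open>auto simp: m_neg[OF modA]\<close>)
    also have "psum ?A (\<lambda>r. mneg ?A (a' r)) q = mneg ?A (psum ?A a' q)" by (rule psum_neg[OF modA]) (use ac in auto)
    finally show ?thesis .
  qed
  have PK: "P q \<in> Kin n q u" for q
  proof -
    have P0: "P q \<in> Kin n 0 u" using psum_Kin[OF eP] by (simp add: P_def)
    have pa: "psum ?A a' q \<in> carr ?A" "psum ?A b' q \<in> carr ?A" using psum_carr[OF modA] ac by auto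
    have "del (Fin (u - int q)) (Fin u) PInf n (P q) = madd (H (Fin (u - int q)) (Fin u) (n - 1))
        (del (Fin (u - int q)) (Fin u) PInf n (psum ?A b' q)) (mneg (H (Fin (u - int q)) (Fin u) (n - 1)) (del (Fin (u - int q)) (Fin u) PInf n (psum ?A a' q)))"
      using Peq pa by (simp add: del_add del_neg m_neg[OF modA])
    also have "del (Fin (u - int q)) (Fin u) PInf n (psum ?A a' q) = del (Fin (u - int q)) (Fin u) PInf n (psum ?A b' q)"
      using fun_cong[OF ph, of "u - int q"] by (simp add: phix_def)
    finally have "del (Fin (u - int q)) (Fin u) PInf n (P q) = mzero (H (Fin (u - int q)) (Fin u) (n - 1))"
      using pa by (simp add: m_rneg[OF modH] del_carr)
    then show ?thesis using P0 by (simp add: Kin_def)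
  qed
  define w where "w = (\<lambda>q. mneg ?A (P q))"
  have wP: "w \<in> PIK n u" using PK Kin_neg by (simp add: PIK_def w_def)
  have dl: "madd ?A (w q) (mneg ?A (w (Suc q))) = e q" for q
  proof -
    have "madd ?A (w q) (mneg ?A (w (Suc q))) = madd ?A (mneg ?A (P q)) (madd ?A (P q) (e q))"
    proof -
      have "w (Suc q) = mneg ?A (madd ?A (P q) (e q))" by (simp add: w_def P_def)
      then have "mneg ?A (w (Suc q)) = madd ?A (P q) (e q)" using m_neg_neg[OF modA m_add[OF modA Pc ec]] by simp
      then show ?thesis by (simp add: w_def)
    qed
    also have "\<dots> = madd ?A (madd ?A (mneg ?A (P q)) (P q)) (e q)" using Pc ec by (simp add: m_assoc[OF modA] m_neg[OF modA])
    also have "\<dots> = e q" using Pc ec by (simp add: m_lneg[OF modA] m_lzero[OF modA])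
    finally show ?thesis .
  qed
  have bq: "b' q = madd ?A (a' q) (e q)" for q
  proof -
    have "madd ?A (a' q) (e q) = madd ?A (madd ?A (a' q) (mneg ?A (a' q))) (b' q)"
      unfolding e_def using ac by (metis m_assoc[OF modA] m_comm[OF modA] m_neg[OF modA])
    then show ?thesis using ac by (simp add: m_rneg[OF modA] m_lzero[OF modA])
  qed
  interpret T: tower "KT n u" "\<lambda>r x. x" by (rule towerK)
  have "b' \<in> lcK n u a'" unfolding T.lc_mem PIK_eq
    using b' wP bq dl by (auto simp: lim1_delta_def intro!: bexI[of _ w])
  then have "lcK n u a' = lcK n u b'" using T.lc_eq[of a' b'] a' b' PIK_eq by simp
  then show ?thesis using W_eq[OF a b] u by (auto simp: a'_def b'_def)
qed

lemma Phi_surj: assumes c: "c \<in> carr (ker_kappa H eta (n - 1))"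
  shows "\<exists>s a. a \<in> PIK n s \<and> Phi H eta del n (Wcls n s a) = c"
proof -
  interpret D: dsys "LimH H eta (n - 1)" "LimH_tr eta (n - 1)" UNIV by (rule dsysCL)
  have "c \<in> carr (ColimLim H eta (n - 1))" using c by (simp add: ker_kappa_def kerm_def)
  then obtain j X where X: "X \<in> carr (LimH H eta (n - 1) j)" "c = clsCL (n - 1) (j, X)"
    unfolding ColimLim_def D.carr_colim by blast
  have dies: "\<forall>i\<le>j. \<exists>u\<ge>j. eta (Fin i) (Fin j) (Fin i) (Fin u) (n - 1) (X i) = mzero (H (Fin i) (Fin u) (n - 1))"
    using ker_iff[OF X(1)] c X(2) by simp
  have Xc: "\<And>i. i \<le> j \<Longrightarrow> X i \<in> carr (H (Fin i) (Fin j) (n - 1))" using X(1) by (simp add: LimH_mem)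
  have ex: "\<exists>z. z \<in> Kin n 0 j \<and> del (Fin i) (Fin j) PInf n z = X i" if i: "i \<le> j" for i
  proof -
    obtain u where u: "j \<le> u" "eta (Fin i) (Fin j) (Fin i) (Fin u) (n - 1) (X i) = mzero (H (Fin i) (Fin u) (n - 1))"
      using dies i by auto
    have "X i \<in> del (Fin i) (Fin j) (Fin u) n ` carr (H (Fin j) (Fin u) n)"
      using ex3[of "Fin i" "Fin j" "Fin u" n] i u Xc[OF i] by simp
    then obtain b where b: "b \<in> carr (H (Fin j) (Fin u) n)" "X i = del (Fin i) (Fin j) (Fin u) n b" by auto
    define z where "z = eta (Fin j) (Fin u) (Fin j) PInf n b"
    have zc: "z \<in> carr (H (Fin j) PInf n)" using b u by (simp add: z_def eta_carr)
    have "del (Fin i) (Fin j) PInf n z = eta (Fin i) (Fin j) (Fin i) (Fin j) (n - 1) (del (Fin i) (Fin j) (Fin u) n b)"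
      using del_nat[OF b(1), of "Fin i" "Fin i" "Fin j" PInf] i u by (simp add: z_def)
    also have "\<dots> = X i" using b eta_id Xc[OF i] i by simp
    finally have d: "del (Fin i) (Fin j) PInf n z = X i" .
    have "z \<in> eta (Fin j) (Fin u) (Fin j) PInf n ` carr (H (Fin j) (Fin u) n)" using b by (simp add: z_def)
    then have k: "eta (Fin j) PInf (Fin u) PInf n z = mzero (H (Fin u) PInf n)"
      using ex1[of "Fin j" "Fin u" PInf n] u by auto
    have "del (Fin j) (Fin j) PInf n z = mzero (H (Fin j) (Fin j) (n - 1))"
      using HH_zero del_carr[OF zc] by simp
    then have "z \<in> Kin n 0 j" using zc k u by (auto simp: Kin_def)
    then show ?thesis using d by blast
  qed
  define kk where "kk = (\<lambda>i. if i < j then (SOME z. z \<in> Kin n 0 j \<and> del (Fin i) (Fin j) PInf n z = X i) else mzero (H (Fin j) PInf n))"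
  have kk: "kk i \<in> Kin n 0 j \<and> del (Fin i) (Fin j) PInf n (kk i) = X i" if i: "i \<le> j" for i
  proof (cases "i < j")
    case True then show ?thesis using someI_ex[OF ex[OF i]] by (simp add: kk_def)
  next
    case False
    then have "i = j" using i by simp
    then show ?thesis using Kin_zero del0 HH_zero Xc[OF i] False by (simp add: kk_def)
  qed
  let ?A = "H (Fin j) PInf n"
  have kkc: "\<And>i. i \<le> j \<Longrightarrow> kk i \<in> carr ?A" using kk Kin_carr by blast
  define a where "a = (\<lambda>r::nat. madd ?A (kk (j - int r - 1)) (mneg ?A (kk (j - int r))))"
  have aP: "a \<in> PIK n j" unfolding PIK_def
  proof (intro CollectI allI)
    fix r
    have k1: "kk (j - int r - 1) \<in> carr ?A" "kk (j - int r) \<in> carr ?A" using kkc by auto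
    have a0: "a r \<in> Kin n 0 j" unfolding a_def using kk by (auto intro!: Kin_add Kin_neg)
    have c1: "kk (j - int r - 1) \<in> carr (H (Fin j) PInf n)" using k1 by simp
    have "del (Fin (j - int r)) (Fin j) PInf n (kk (j - int r - 1)) =
        eta (Fin (j - int r - 1)) (Fin j) (Fin (j - int r)) (Fin j) (n - 1) (del (Fin (j - int r - 1)) (Fin j) PInf n (kk (j - int r - 1)))"
      using del_nat[OF c1, of "Fin (j - int r - 1)" "Fin (j - int r)" "Fin j" PInf] eta_id[OF c1] by simp
    also have "\<dots> = X (j - int r)" using kk[of "j - int r - 1"] X(1) by (simp add: LimH_mem)
    finally have d1: "del (Fin (j - int r)) (Fin j) PInf n (kk (j - int r - 1)) = X (j - int r)" .
    have "del (Fin (j - int r)) (Fin j) PInf n (a r) = madd (H (Fin (j - int r)) (Fin j) (n - 1)) (X (j - int r)) (mneg (H (Fin (j - int r)) (Fin j) (n - 1)) (X (j - int r)))"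
      using k1 d1 kk[of "j - int r"] by (simp add: a_def del_add del_neg m_neg[OF modA])
    also have "\<dots> = mzero (H (Fin (j - int r)) (Fin j) (n - 1))" using Xc[of "j - int r"] by (simp add: m_rneg[OF modH])
    finally show "a r \<in> Kin n r j" using a0 by (simp add: Kin_def)
  qed
  have ps: "psum ?A a q = kk (j - int q)" for q
  proof (induction q)
    case 0 then show ?case by (simp add: kk_def)
  next
    case (Suc q)
    have k1: "kk (j - int q - 1) \<in> carr ?A" "kk (j - int q) \<in> carr ?A" using kkc by auto
    have "psum ?A a (Suc q) = madd ?A (kk (j - int q)) (madd ?A (kk (j - int q - 1)) (mneg ?A (kk (j - int q))))"
      using Suc by (simp add: a_def)
    also have "\<dots> = madd ?A (madd ?A (kk (j - int q)) (mneg ?A (kk (j - int q)))) (kk (j - int q - 1))"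
      using k1 by (metis m_assoc[OF modA] m_comm[OF modA] m_neg[OF modA])
    also have "\<dots> = kk (j - int q - 1)" using k1 by (simp add: m_rneg[OF modA] m_lzero[OF modA])
    finally show ?case by (simp add: algebra_simps)
  qed
  have "phix H del n j a = X"
  proof (rule ext)
    fix i show "phix H del n j a i = X i"
    proof (cases "i \<le> j")
      case True then show ?thesis using ps kk[OF True] by (simp add: phix_def)
    next
      case False then show ?thesis using X(1) by (simp add: phix_def LimH_mem)
    qed
  qed
  then show ?thesis using Phi_cls[OF aP] X(2) aP by blast
qed

theorem Phi_iso: "is_iso (Wpp H eta n) (ker_kappa H eta (n - 1)) (Phi H eta del n)"
proof -
  have hom: "is_hom (Wpp H eta n) (ker_kappa H eta (n - 1)) (Phi H eta del n)"
    unfolding is_hom_def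
  proof (intro conjI ballI allI)
    fix c assume "c \<in> carr (Wpp H eta n)"
    then obtain s a where "a \<in> PIK n s" "c = Wcls n s a" using W_carr by blast
    then show "Phi H eta del n c \<in> carr (ker_kappa H eta (n - 1))" using Phi_in by simp
  next
    fix c d assume "c \<in> carr (Wpp H eta n)" "d \<in> carr (Wpp H eta n)"
    then obtain s a s' b where ab: "a \<in> PIK n s" "c = Wcls n s a" "b \<in> PIK n s'" "d = Wcls n s' b" using W_carr by meson
    define u where "u = max s s'"
    have su: "s \<le> u" "s' \<le> u" by (auto simp: u_def)
    have a': "(\<lambda>r. eta (Fin s) PInf (Fin u) PInf n (a r)) \<in> PIK n u" and b': "(\<lambda>r. eta (Fin s') PInf (Fin u) PInf n (b r)) \<in> PIK n u"
      using etaPIK ab su by auto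
    have "Phi H eta del n (madd (Wpp H eta n) c d) = clsCL (n - 1) (u, phix H del n u
        (\<lambda>r. madd (H (Fin u) PInf n) (eta (Fin s) PInf (Fin u) PInf n (a r)) (eta (Fin s') PInf (Fin u) PInf n (b r))))"
      using ab W_add[OF ab(1) ab(3) su] Phi_cls PIK_add[OF a' b'] by simp
    also have "\<dots> = clsCL (n - 1) (u, madd (LimH H eta (n - 1) u) (PL (n - 1) s u (phix H del n s a)) (PL (n - 1) s' u (phix H del n s' b)))"
      using phix_add[OF a' b'] phix_push ab su by simp
    also have "\<dots> = madd (ker_kappa H eta (n - 1)) (Phi H eta del n c) (Phi H eta del n d)"
      using CL_add[OF phix_carr[OF ab(1)] phix_carr[OF ab(3)] su] Phi_cls ab
      by (simp add: ker_kappa_def kerm_def ColimLim_def)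
    finally show "Phi H eta del n (madd (Wpp H eta n) c d) = madd (ker_kappa H eta (n - 1)) (Phi H eta del n c) (Phi H eta del n d)" .
  next
    fix r c assume "c \<in> carr (Wpp H eta n)"
    then obtain s a where ab: "a \<in> PIK n s" "c = Wcls n s a" using W_carr by blast
    have "Phi H eta del n (msmul (Wpp H eta n) r c) = clsCL (n - 1) (s, phix H del n s (\<lambda>q. msmul (H (Fin s) PInf n) r (a q)))"
      using ab W_smul Phi_cls PIK_smul by simp
    also have "\<dots> = msmul (ker_kappa H eta (n - 1)) r (Phi H eta del n c)"
      using phix_smul[OF ab(1)] CL_smul[OF phix_carr[OF ab(1)]] Phi_cls ab
      by (simp add: ker_kappa_def kerm_def ColimLim_def)
    finally show "Phi H eta del n (msmul (Wpp H eta n) r c) = msmul (ker_kappa H eta (n - 1)) r (Phi H eta del n c)" .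
  qed
  have inj: "inj_on (Phi H eta del n) (carr (Wpp H eta n))"
  proof (rule inj_onI)
    fix c d assume "c \<in> carr (Wpp H eta n)" "d \<in> carr (Wpp H eta n)" "Phi H eta del n c = Phi H eta del n d"
    moreover obtain s a s' b where ab: "a \<in> PIK n s" "c = Wcls n s a" "b \<in> PIK n s'" "d = Wcls n s' b"
      using calculation W_carr by meson
    ultimately show "c = d" using Phi_inj by simp
  qed
  have img: "Phi H eta del n ` carr (Wpp H eta n) = carr (ker_kappa H eta (n - 1))"
  proof
    show "Phi H eta del n ` carr (Wpp H eta n) \<subseteq> carr (ker_kappa H eta (n - 1))" using hom by (auto simp: is_hom_def)
    show "carr (ker_kappa H eta (n - 1)) \<subseteq> Phi H eta del n ` carr (Wpp H eta n)"
    proof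
      fix c assume "c \<in> carr (ker_kappa H eta (n - 1))"
      then obtain s a where "a \<in> PIK n s" "Phi H eta del n (Wcls n s a) = c" using Phi_surj by blast
      then show "c \<in> Phi H eta del n ` carr (Wpp H eta n)" using W_carr by blast
    qed
  qed
  show ?thesis unfolding is_iso_def bij_betw_def using hom inj img by simp
qed

end

locale rce2 = A: rce H eta del + B: rce H' eta' del'
  for H :: "zinf \<Rightarrow> zinf \<Rightarrow> int \<Rightarrow> ('r::ring_1, 'a) rmod" and eta del
    and H' :: "zinf \<Rightarrow> zinf \<Rightarrow> int \<Rightarrow> ('r::ring_1, 'a) rmod" and eta' del' +
  fixes f :: "zinf \<Rightarrow> zinf \<Rightarrow> int \<Rightarrow> 'a \<Rightarrow> 'a"
  assumes MOR: "right_CE_mor H eta del H' eta' del' f"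
begin

lemma f_hom: "zle i j \<Longrightarrow> is_hom (H i j n) (H' i j n) (f i j n)"
  using MOR unfolding right_CE_mor_def by (elim conjE) blast
lemma f_eta: "x \<in> carr (H i j n) \<Longrightarrow> zle i j \<Longrightarrow> zle i' j' \<Longrightarrow> zle i i' \<Longrightarrow> zle j j' \<Longrightarrow>
   f i' j' n (eta i j i' j' n x) = eta' i j i' j' n (f i j n x)"
  using MOR unfolding right_CE_mor_def by (elim conjE) blast
lemma f_del: "x \<in> carr (H j k n) \<Longrightarrow> zle i j \<Longrightarrow> zle j k \<Longrightarrow>
   f i j (n - 1) (del i j k n x) = del' i j k n (f j k n x)"
  using MOR unfolding right_CE_mor_def by (elim conjE) blast

lemma f_carr: "x \<in> carr (H i j n) \<Longrightarrow> zle i j \<Longrightarrow> f i j n x \<in> carr (H' i j n)"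
  using hom_carr[OF f_hom] by blast
lemma f_zero: "zle i j \<Longrightarrow> f i j n (mzero (H i j n)) = mzero (H' i j n)"
  using hom_zero[OF A.modH B.modH f_hom] by blast

lemma f_Kin: assumes x: "x \<in> A.Kin n r s" shows "f (Fin s) PInf n x \<in> B.Kin n r s"
proof -
  have c: "x \<in> carr (H (Fin s) PInf n)" using x A.Kin_carr by blast
  obtain u where u: "s \<le> u" "eta (Fin s) PInf (Fin u) PInf n x = mzero (H (Fin u) PInf n)"
    using x by (auto simp: A.Kin_def)
  have "del' (Fin (s - int r)) (Fin s) PInf n (f (Fin s) PInf n x) = f (Fin (s - int r)) (Fin s) (n - 1) (del (Fin (s - int r)) (Fin s) PInf n x)"
    using f_del[OF c] by simp
  also have "\<dots> = mzero (H' (Fin (s - int r)) (Fin s) (n - 1))" using x f_zero by (simp add: A.Kin_def)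
  finally have d: "del' (Fin (s - int r)) (Fin s) PInf n (f (Fin s) PInf n x) = mzero (H' (Fin (s - int r)) (Fin s) (n - 1))" .
  have "eta' (Fin s) PInf (Fin u) PInf n (f (Fin s) PInf n x) = mzero (H' (Fin u) PInf n)"
    using f_eta[OF c, of "Fin u" PInf] u f_zero by simp
  then show ?thesis using d u f_carr[OF c] by (auto simp: B.Kin_def)
qed

definition fmap :: "int \<Rightarrow> int \<Rightarrow> (int \<Rightarrow> 'a) \<Rightarrow> int \<Rightarrow> 'a" where
  "fmap m j Y = (\<lambda>i. if i \<le> j then f (Fin i) (Fin j) m (Y i) else undefined)"

lemma fmap_carr: assumes Y: "Y \<in> carr (LimH H eta m j)" shows "fmap m j Y \<in> carr (LimH H' eta' m j)"
  using Y unfolding A.LimH_mem B.LimH_mem fmap_def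
  by (auto simp: f_carr f_eta[symmetric])

lemma PL_f: assumes Y: "Y \<in> carr (LimH H eta m j)" and "j \<le> u"
  shows "B.PL m j u (fmap m j Y) = fmap m u (A.PL m j u Y)"
proof (rule ext)
  fix i
  have c: "Y (min i j) \<in> carr (H (Fin (min i j)) (Fin j) m)" using Y by (simp add: A.LimH_mem)
  show "B.PL m j u (fmap m j Y) i = fmap m u (A.PL m j u Y) i"
    using assms f_eta[OF c, of "Fin i" "Fin u"] by (auto simp: B.PL_def A.PL_def fmap_def)
qed

lemma kkm_cls: assumes Y: "Y \<in> carr (LimH H eta m j)"
  shows "ker_kappa_map H' eta' f m (A.clsCL m (j, Y)) = B.clsCL m (j, fmap m j Y)"
proof -
  interpret D: dsys "LimH H eta m" "LimH_tr eta m" UNIV by (rule A.dsysCL)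
  obtain j' Y' where r: "rep (A.clsCL m (j, Y)) = (j', Y')" by (metis prod.exhaust)
  note R = D.rep_cls[OF UNIV_I Y r]
  obtain u where u: "j \<le> u" "j' \<le> u" "A.PL m j u Y = A.PL m j' u Y'" using A.CL_eq[OF Y R(2)] R by auto
  have "B.clsCL m (j', fmap m j' Y') = B.clsCL m (j, fmap m j Y)"
    using B.CL_eq[OF fmap_carr[OF R(2)] fmap_carr[OF Y]] PL_f[OF Y u(1)] PL_f[OF R(2) u(2)] u by auto
  then show ?thesis unfolding ker_kappa_map_def r by (simp add: fmap_def)
qed

lemma fmap_phix: assumes a: "a \<in> A.PIK n s"
  shows "fmap (n - 1) s (phix H del n s a) = phix H' del' n s (\<lambda>r. f (Fin s) PInf n (a r))"
proof (rule ext)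
  fix i
  have ac: "\<And>r. a r \<in> carr (H (Fin s) PInf n)" using a A.PIK_carr by blast
  have P: "psum (H (Fin s) PInf n) a k \<in> carr (H (Fin s) PInf n)" for k using psum_carr[OF A.modA ac] .
  show "fmap (n - 1) s (phix H del n s a) i = phix H' del' n s (\<lambda>r. f (Fin s) PInf n (a r)) i"
    using f_del[OF P] psum_hom[OF A.modA B.modA f_hom, where a=a] ac by (auto simp: fmap_def phix_def)
qed

lemma natural: assumes c: "c \<in> carr (Wpp H eta n)"
  shows "Phi H' eta' del' n (Wpp_map H' eta' f n c) = ker_kappa_map H' eta' f (n - 1) (Phi H eta del n c)"
proof -
  obtain s a where a: "a \<in> A.PIK n s" "c = A.Wcls n s a" using c A.W_carr by blast
  obtain s0 d0 where r: "rep c = (s0, d0)" by (metis prod.exhaust)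
  note R = A.W_rep[OF a(1) r[unfolded a(2)]]
  define b where "b = (\<lambda>r. f (Fin s0) PInf n (rep d0 r))"
  have b: "b \<in> B.PIK n s0" using R(1) f_Kin by (simp add: A.PIK_def B.PIK_def b_def)
  have "Wpp_map H' eta' f n c = B.Wcls n s0 b"
    unfolding Wpp_map_def Wmap_def r using r by (simp add: B.Wcls_def B.Ktower_eq b_def)
  then have "Phi H' eta' del' n (Wpp_map H' eta' f n c) = B.clsCL (n - 1) (s0, phix H' del' n s0 b)"
    using B.Phi_cls[OF b] by simp
  also have "\<dots> = ker_kappa_map H' eta' f (n - 1) (A.clsCL (n - 1) (s0, phix H del n s0 (rep d0)))"
    using kkm_cls[OF A.phix_carr[OF R(1)]] fmap_phix[OF R(1)] by (simp add: b_def)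
  also have "\<dots> = ker_kappa_map H' eta' f (n - 1) (Phi H eta del n c)"
    using A.Phi_cls[OF R(1)] R(2) a(2) by simp
  finally show ?thesis .
qed

end

theorem theorem6p7:
  "\<exists>\<Phi> :: (zinf \<Rightarrow> zinf \<Rightarrow> int \<Rightarrow> ('r::ring_1, 'a) rmod)
         \<Rightarrow> (zinf \<Rightarrow> zinf \<Rightarrow> zinf \<Rightarrow> zinf \<Rightarrow> int \<Rightarrow> 'a \<Rightarrow> 'a)
         \<Rightarrow> (zinf \<Rightarrow> zinf \<Rightarrow> zinf \<Rightarrow> int \<Rightarrow> 'a \<Rightarrow> 'a)
         \<Rightarrow> int \<Rightarrow> (int \<times> (nat \<Rightarrow> 'a) set) set \<Rightarrow> (int \<times> (int \<Rightarrow> 'a)) set.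
     (\<forall>H eta del. right_CE H eta del \<longrightarrow>
        (\<forall>n. is_iso (Wpp H eta n) (ker_kappa H eta (n - 1)) (\<Phi> H eta del n)))
   \<and> (\<forall>H eta del H' eta' del' f.
        right_CE H eta del \<and> right_CE H' eta' del' \<and> right_CE_mor H eta del H' eta' del' f \<longrightarrow>
        (\<forall>n. \<forall>c\<in>carr (Wpp H eta n).
           \<Phi> H' eta' del' n (Wpp_map H' eta' f n c) = ker_kappa_map H' eta' f (n - 1) (\<Phi> H eta del n c)))"
proof (intro exI[of _ Phi] conjI allI impI ballI)
  fix H :: "zinf \<Rightarrow> zinf \<Rightarrow> int \<Rightarrow> ('r::ring_1, 'a) rmod" and eta del n
  assume "right_CE H eta del"
  then interpret rce H eta del by unfold_locales
  show "is_iso (Wpp H eta n) (ker_kappa H eta (n - 1)) (Phi H eta del n)" by (rule Phi_iso)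
next
  fix H :: "zinf \<Rightarrow> zinf \<Rightarrow> int \<Rightarrow> ('r::ring_1, 'a) rmod" and eta del H' eta' del' f n c
  assume h: "right_CE H eta del \<and> right_CE H' eta' del' \<and> right_CE_mor H eta del H' eta' del' f"
    and c: "c \<in> carr (Wpp H eta n)"
  interpret rce2 H eta del H' eta' del' f using h by (simp add: rce2_def rce2_axioms_def rce_def)
  show "Phi H' eta' del' n (Wpp_map H' eta' f n c) = ker_kappa_map H' eta' f (n - 1) (Phi H eta del n c)"
    by (rule natural[OF c])
qed

end
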